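(* Let $P\subseteq\omega$ and let $p_0\ge p_1\ge p_2\ge\cdots$ be a sequence of $\mathbb C$-conditions with $\lim_s|p_s|=\infty$ which is 3-generic relative to $P$, and let $f=\bigcup_s\sigma^{p_s}:[\omega]^2\to 2$. Then $f\oplus P$ does not compute any set p-homogeneous for $f$.
   Context: $\mathbb C$ is the following notion of forcing. A condition is a triple $p=\langle\sigma^p,l^p,|p|\rangle$ where $|p|\in\omega$, $\sigma^p:[|p|]^2\to 2$, $l^p:|p|\to 2\times\omega$, and whenever $l^p(x)=\langle i,z\rangle$, $\sigma^p(x,y)$ is defined and $y\ge z$, then $\sigma^p(x,y)=i$. $q\le p$ if $|q|\ge|p|$, $\sigma^q\supseteq\sigma^p$, $l^q\supseteq l^p$. A descending sequence $(p_s)$ is 3-generic relative to $P$ if for every set $W$ of conditions that is $\Sigma^0_3$-definable in $P$, either some $p_s$ lies in $W$ or some $p_s$ has no extension in $W$. $f(x,y)$ means $f(\{x,y\})$ for $x<y$. $A\oplus B=\{2x:x\in A\}\cup\{2y+1:y\in B\}$. A set $H=H_L\oplus H_R$ with $H_L,H_R$ infinite is p-homogeneous for $f$ if $f(\{x,y\})$ is constant over $x\in H_L$, $y\in H_R$, $x\neq y$. *)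

theory Defs
  imports Main "HOL-Library.Nat_Bijection"
begin

datatype rf = Zr | Sc | Pj nat | Cn rf "rf list" | Pr rf rf | Mn rf | Orc

definition arg0 :: "nat list \<Rightarrow> nat" where
  "arg0 xs = (if xs = [] then 0 else hd xs)"

inductive ev :: "nat set \<Rightarrow> rf \<Rightarrow> nat list \<Rightarrow> nat \<Rightarrow> bool" for A :: "nat set" where
  ev_Zr: "ev A Zr xs 0"
| ev_Sc: "ev A Sc xs (Suc (arg0 xs))"
| ev_Pj: "ev A (Pj i) xs (if i < length xs then xs ! i else 0)"
| ev_Cn: "length ys = length gs \<Longrightarrow> (\<forall>i<length gs. ev A (gs ! i) xs (ys ! i))
           \<Longrightarrow> ev A f ys v \<Longrightarrow> ev A (Cn f gs) xs v"
| ev_Pr0: "ev A f xs v \<Longrightarrow> ev A (Pr f g) (0 # xs) v"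
| ev_PrS: "ev A (Pr f g) (n # xs) u \<Longrightarrow> ev A g (n # u # xs) v
           \<Longrightarrow> ev A (Pr f g) (Suc n # xs) v"
| ev_Mn: "ev A f (n # xs) 0 \<Longrightarrow> (\<forall>m<n. \<exists>u. u \<noteq> 0 \<and> ev A f (m # xs) u)
           \<Longrightarrow> ev A (Mn f) xs n"
| ev_Orc: "ev A Orc xs (if arg0 xs \<in> A then 1 else 0)"

definition turing_le :: "nat set \<Rightarrow> nat set \<Rightarrow> bool" where
  "turing_le B A \<longleftrightarrow> (\<exists>e. \<forall>x. ev A e [x] (if x \<in> B then 1 else 0))"

definition rec_rel :: "nat set \<Rightarrow> nat \<Rightarrow> (nat list \<Rightarrow> bool) \<Rightarrow> bool" where
  "rec_rel A k R \<longleftrightarrow> (\<exists>e. \<forall>xs. length xs = k \<longrightarrow> ev A e xs (if R xs then 1 else 0))"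

definition sigma3 :: "nat set \<Rightarrow> nat set \<Rightarrow> bool" where
  "sigma3 A S \<longleftrightarrow> (\<exists>R. rec_rel A 4 R \<and>
      (\<forall>x. x \<in> S \<longleftrightarrow> (\<exists>a. \<forall>b. \<exists>c. R [x, a, b, c])))"

definition join :: "nat set \<Rightarrow> nat set \<Rightarrow> nat set" where
  "join A B = {2 * x | x. x \<in> A} \<union> {2 * y + 1 | y. y \<in> B}"

text \<open>A condition is a pair (sg, lb): |p| = length lb; sg ! y is the list of
  values sigma(x,y) for x < y (so length (sg ! y) = y); lb ! x = (i, z) is l(x).\<close>
type_synonym cond = "nat list list \<times> (nat \<times> nat) list"

definition clen :: "cond \<Rightarrow> nat" where
  "clen p = length (snd p)"

definition csig :: "cond \<Rightarrow> nat \<Rightarrow> nat \<Rightarrow> nat" where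
  "csig p x y = fst p ! y ! x"

definition clab :: "cond \<Rightarrow> nat \<Rightarrow> nat \<times> nat" where
  "clab p x = snd p ! x"

definition is_cond :: "cond \<Rightarrow> bool" where
  "is_cond p \<longleftrightarrow>
     length (fst p) = clen p \<and>
     (\<forall>y<clen p. length (fst p ! y) = y) \<and>
     (\<forall>x y. x < y \<and> y < clen p \<longrightarrow> csig p x y < 2) \<and>
     (\<forall>x<clen p. fst (clab p x) < 2) \<and>
     (\<forall>x y. x < y \<and> y < clen p \<and> snd (clab p x) \<le> y \<longrightarrow> csig p x y = fst (clab p x))"

definition cle :: "cond \<Rightarrow> cond \<Rightarrow> bool" where
  "cle q p \<longleftrightarrow> clen q \<ge> clen p \<and>
     (\<forall>x y. x < y \<and> y < clen p \<longrightarrow> csig q x y = csig p x y) \<and>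
     (\<forall>x<clen p. clab q x = clab p x)"

definition ccode :: "cond \<Rightarrow> nat" where
  "ccode p = prod_encode (list_encode (map list_encode (fst p)),
                          list_encode (map prod_encode (snd p)))"

definition three_generic :: "nat set \<Rightarrow> (nat \<Rightarrow> cond) \<Rightarrow> bool" where
  "three_generic P ps \<longleftrightarrow>
     (\<forall>W. W \<subseteq> Collect is_cond \<longrightarrow> sigma3 P (ccode ` W) \<longrightarrow>
        (\<exists>s. ps s \<in> W) \<or> (\<exists>s. \<not> (\<exists>q\<in>W. cle q (ps s))))"

text \<open>A coloring of pairs is given by f x y for x < y (values for x >= y are irrelevant).\<close>
definition fpair :: "(nat \<Rightarrow> nat \<Rightarrow> nat) \<Rightarrow> nat \<Rightarrow> nat \<Rightarrow> nat" where
  "fpair f x y = (if x < y then f x y else f y x)"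

definition colset :: "(nat \<Rightarrow> nat \<Rightarrow> nat) \<Rightarrow> nat set" where
  "colset f = {prod_encode (x, y) | x y. x < y \<and> f x y = 1}"

definition p_homog :: "(nat \<Rightarrow> nat \<Rightarrow> nat) \<Rightarrow> nat set \<Rightarrow> bool" where
  "p_homog f H \<longleftrightarrow>
     (let HL = {x. 2 * x \<in> H}; HR = {y. 2 * y + 1 \<in> H} in
      infinite HL \<and> infinite HR \<and>
      (\<exists>c. \<forall>x\<in>HL. \<forall>y\<in>HR. x \<noteq> y \<longrightarrow> fpair f x y = c))"

end

theory Submission
  imports Defs "HOL-Library.Nat_Bijection"
begin



definition progc :: "nat set \<Rightarrow> nat \<Rightarrow> rf \<Rightarrow> (nat list \<Rightarrow> nat) \<Rightarrow> bool" where
  "progc A k e F \<longleftrightarrow> (\<forall>xs. length xs = k \<longrightarrow> ev A e xs (F xs))"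

definition cf :: "nat set \<Rightarrow> nat \<Rightarrow> (nat list \<Rightarrow> nat) \<Rightarrow> bool" where
  "cf A k F \<longleftrightarrow> (\<exists>e. progc A k e F)"

definition cr :: "nat set \<Rightarrow> nat \<Rightarrow> (nat list \<Rightarrow> bool) \<Rightarrow> bool" where
  "cr A k R \<longleftrightarrow> cf A k (\<lambda>xs. if R xs then 1 else 0)"

lemma cf_cong: "cf A k F \<Longrightarrow> (\<And>xs. length xs = k \<Longrightarrow> F xs = G xs) \<Longrightarrow> cf A k G"
  unfolding cf_def progc_def by metis

lemma cr_cong: "cr A k R \<Longrightarrow> (\<And>xs. length xs = k \<Longrightarrow> R xs = S xs) \<Longrightarrow> cr A k S"
  unfolding cr_def by (erule cf_cong) simp

lemma cf_proj: "i < k \<Longrightarrow> cf A k (\<lambda>xs. xs ! i)"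
  unfolding cf_def progc_def
  by (rule exI[of _ "Pj i"]) (metis (full_types) ev_Pj)

lemma cf_zero: "cf A k (\<lambda>xs. 0)"
  unfolding cf_def progc_def by (auto intro: ev_Zr)

lemma cf_orc: "cf A 1 (\<lambda>xs. if xs ! 0 \<in> A then 1 else 0)"
  unfolding cf_def progc_def
  apply (rule exI[of _ Orc])
  apply clarify
  subgoal for xs using ev_Orc[of A xs] by (cases xs) (auto simp: arg0_def)
  done

lemma cf_suc1: "cf A 1 (\<lambda>xs. Suc (xs ! 0))"
  unfolding cf_def progc_def
  apply (rule exI[of _ Sc])
  apply clarify
  subgoal for xs using ev_Sc[of A xs] by (cases xs) (auto simp: arg0_def)
  done

lemma progs_exist: "(\<forall>F\<in>set Fs. cf A k F) \<Longrightarrow> \<exists>gs. list_all2 (progc A k) gs Fs"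
proof (induction Fs)
  case Nil then show ?case by auto
next
  case (Cons F Fs)
  then obtain gs where "list_all2 (progc A k) gs Fs" by auto
  moreover obtain g where "progc A k g F" using Cons.prems cf_def by auto
  ultimately show ?case by (intro exI[of _ "g # gs"]) auto
qed

lemma cf_comp:
  assumes "cf A (length Fs) G" "\<forall>F\<in>set Fs. cf A k F"
  shows "cf A k (\<lambda>xs. G (map (\<lambda>F. F xs) Fs))"
proof -
  obtain f where f: "progc A (length Fs) f G" using assms(1) cf_def by auto
  obtain gs where gs: "list_all2 (progc A k) gs Fs" using progs_exist assms(2) by blast
  have "progc A k (Cn f gs) (\<lambda>xs. G (map (\<lambda>F. F xs) Fs))"
    unfolding progc_def
  proof (intro allI impI)
    fix xs :: "nat list" assume len: "length xs = k"
    have lg: "length gs = length Fs" using gs list_all2_lengthD by blast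
    have a: "length (map (\<lambda>F. F xs) Fs) = length gs" using lg by simp
    have b: "\<forall>i<length gs. ev A (gs ! i) xs (map (\<lambda>F. F xs) Fs ! i)"
      using gs len lg by (auto simp: progc_def list_all2_conv_all_nth)
    have c: "ev A f (map (\<lambda>F. F xs) Fs) (G (map (\<lambda>F. F xs) Fs))"
      using f by (simp add: progc_def)
    show "ev A (Cn f gs) xs (G (map (\<lambda>F. F xs) Fs))"
      by (rule ev_Cn[OF a b c])
  qed
  then show ?thesis unfolding cf_def by blast
qed

lemma cf_comp1: "cf A 1 G \<Longrightarrow> cf A k F \<Longrightarrow> cf A k (\<lambda>xs. G [F xs])"
  using cf_comp[of A "[F]" G k] by simp

lemma cf_comp2: "cf A 2 G \<Longrightarrow> cf A k F1 \<Longrightarrow> cf A k F2 \<Longrightarrow> cf A k (\<lambda>xs. G [F1 xs, F2 xs])"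
  using cf_comp[of A "[F1, F2]" G k] by (simp add: numeral_2_eq_2)

lemma cf_comp3: "cf A 3 G \<Longrightarrow> cf A k F1 \<Longrightarrow> cf A k F2 \<Longrightarrow> cf A k F3 \<Longrightarrow> cf A k (\<lambda>xs. G [F1 xs, F2 xs, F3 xs])"
  using cf_comp[of A "[F1, F2, F3]" G k] by (simp add: numeral_3_eq_3)

lemma cf_rec:
  assumes "cf A k F" "cf A (Suc (Suc k)) G"
  shows "cf A (Suc k) (\<lambda>xs. rec_nat (F (tl xs)) (\<lambda>m u. G (m # u # tl xs)) (hd xs))"
proof -
  obtain f where f: "progc A k f F" using assms(1) cf_def by auto
  obtain g where g: "progc A (Suc (Suc k)) g G" using assms(2) cf_def by auto
  have "ev A (Pr f g) (n # ys) (rec_nat (F ys) (\<lambda>m u. G (m # u # ys)) n)" if "length ys = k" for n ys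
  proof (induction n)
    case 0 then show ?case using f that by (auto simp: progc_def intro: ev_Pr0)
  next
    case (Suc n) then show ?case using g that by (auto simp: progc_def intro: ev_PrS)
  qed
  then have "progc A (Suc k) (Pr f g) (\<lambda>xs. rec_nat (F (tl xs)) (\<lambda>m u. G (m # u # tl xs)) (hd xs))"
    unfolding progc_def by (metis length_Suc_conv list.sel(1,3))
  then show ?thesis unfolding cf_def by blast
qed

lemma cf_const: "cf A k (\<lambda>xs. c)"
proof (induction c)
  case 0 then show ?case by (rule cf_zero)
next
  case (Suc c) then show ?case using cf_comp1[OF cf_suc1 Suc] by simp
qed

lemma cf_suc: "cf A k F \<Longrightarrow> cf A k (\<lambda>xs. Suc (F xs))"
  using cf_comp1[OF cf_suc1] by simp




definition cf1 :: "nat set \<Rightarrow> (nat \<Rightarrow> nat) \<Rightarrow> bool" where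
  "cf1 A h \<longleftrightarrow> cf A 1 (\<lambda>xs. h (xs ! 0))"
definition cf2 :: "nat set \<Rightarrow> (nat \<Rightarrow> nat \<Rightarrow> nat) \<Rightarrow> bool" where
  "cf2 A h \<longleftrightarrow> cf A 2 (\<lambda>xs. h (xs ! 0) (xs ! 1))"

lemma cf1_app: "cf1 A h \<Longrightarrow> cf A k F \<Longrightarrow> cf A k (\<lambda>xs. h (F xs))"
  unfolding cf1_def using cf_comp1[of A "\<lambda>xs. h (xs ! 0)" k F] by simp

lemma cf2_app: "cf2 A h \<Longrightarrow> cf A k F \<Longrightarrow> cf A k G \<Longrightarrow> cf A k (\<lambda>xs. h (F xs) (G xs))"
  unfolding cf2_def using cf_comp2[of A "\<lambda>xs. h (xs ! 0) (xs ! 1)" k F G] by simp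

lemma cf_rec1:
  assumes "cf A 1 (\<lambda>xs. F (xs ! 0))" "cf A 3 (\<lambda>xs. G (xs ! 0) (xs ! 1) (xs ! 2))"
  shows "cf2 A (\<lambda>n y. rec_nat (F y) (\<lambda>m u. G m u y) n)"
proof -
  have "cf A (Suc 1) (\<lambda>xs. rec_nat ((\<lambda>xs. F (xs ! 0)) (tl xs))
      (\<lambda>m u. (\<lambda>xs. G (xs ! 0) (xs ! 1) (xs ! 2)) (m # u # tl xs)) (hd xs))"
    by (rule cf_rec) (use assms in \<open>simp_all add: numeral_3_eq_3\<close>)
  then show ?thesis unfolding cf2_def numeral_2_eq_2 One_nat_def
    by (rule cf_cong) (auto simp: length_Suc_conv)
qed

lemma cf_rec0:
  assumes "cf A 2 (\<lambda>xs. G (xs ! 0) (xs ! 1))"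
  shows "cf1 A (\<lambda>n. rec_nat c G n)"
proof -
  have "cf A (Suc 0) (\<lambda>xs. rec_nat ((\<lambda>xs. c) (tl xs))
      (\<lambda>m u. (\<lambda>xs. G (xs ! 0) (xs ! 1)) (m # u # tl xs)) (hd xs))"
    by (rule cf_rec) (use assms cf_const in \<open>simp_all add: numeral_2_eq_2\<close>)
  then show ?thesis unfolding cf1_def One_nat_def
    by (rule cf_cong) (auto simp: length_Suc_conv)
qed

lemma cf_var: "i < k \<Longrightarrow> cf A k (\<lambda>xs. xs ! i)" by (rule cf_proj)

lemma cf2_add: "cf2 A (+)"
proof -
  have "cf2 A (\<lambda>n y. rec_nat y (\<lambda>m u. Suc u) n)"
    using cf_rec1[of A "\<lambda>y. y" "\<lambda>m u y. Suc u"] cf_var[of _ 1] cf_suc[OF cf_var[of 1 3]]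
    by simp
  moreover have "rec_nat y (\<lambda>m u. Suc u) n = n + y" for n y :: nat by (induction n) auto
  ultimately show ?thesis unfolding cf2_def by simp
qed

lemma cf_add: "cf A k F \<Longrightarrow> cf A k G \<Longrightarrow> cf A k (\<lambda>xs. F xs + G xs)"
  using cf2_app[OF cf2_add] .

lemma cf2_mult: "cf2 A (*)"
proof -
  have "cf2 A (\<lambda>n y. rec_nat 0 (\<lambda>m u. u + y) n)"
    using cf_rec1[of A "\<lambda>y. 0" "\<lambda>m u y. u + y"] cf_const cf_add[OF cf_var[of 1 3] cf_var[of 2 3]]
    by simp
  moreover have "rec_nat 0 (\<lambda>m u. u + y) n = n * y" for n y :: nat by (induction n) auto
  ultimately show ?thesis unfolding cf2_def by simp
qed

lemma cf_mult: "cf A k F \<Longrightarrow> cf A k G \<Longrightarrow> cf A k (\<lambda>xs. F xs * G xs)"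
  using cf2_app[OF cf2_mult] .

lemma cf1_pred: "cf1 A (\<lambda>n. n - 1)"
proof -
  have "cf1 A (\<lambda>n. rec_nat 0 (\<lambda>m u. m) n)"
    by (rule cf_rec0) (rule cf_var, simp)
  moreover have "rec_nat 0 (\<lambda>m u. m) n = n - 1" for n :: nat by (cases n) auto
  ultimately show ?thesis by simp
qed

lemma cf2_monus: "cf2 A (-)"
proof -
  have "cf2 A (\<lambda>n y. rec_nat y (\<lambda>m u. u - 1) n)"
    using cf_rec1[of A "\<lambda>y. y" "\<lambda>m u y. u - 1"] cf_var[of _ 1] cf1_app[OF cf1_pred cf_var[of 1 3]]
    by simp
  moreover have "rec_nat y (\<lambda>m u. u - 1) n = y - n" for n y :: nat by (induction n) auto
  ultimately have "cf2 A (\<lambda>n y. y - n)" by simp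
  then have "cf A 2 (\<lambda>xs. (\<lambda>n y. y - n) (xs ! 1) (xs ! 0))"
    by (rule cf2_app) (auto intro: cf_var)
  then show ?thesis unfolding cf2_def by simp
qed

lemma cf_monus: "cf A k F \<Longrightarrow> cf A k G \<Longrightarrow> cf A k (\<lambda>xs. F xs - G xs)"
  using cf2_app[OF cf2_monus] .

lemma cr_intro: "cf A k H \<Longrightarrow> (\<And>xs. length xs = k \<Longrightarrow> H xs = (if R xs then 1 else 0)) \<Longrightarrow> cr A k R"
  unfolding cr_def by (rule cf_cong)

lemma cr_eq: assumes "cf A k F" "cf A k G" shows "cr A k (\<lambda>xs. F xs = G xs)"
proof (rule cr_intro)
  show "cf A k (\<lambda>xs. 1 - ((F xs - G xs) + (G xs - F xs)))" by (intro cf_monus cf_add cf_const assms)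
qed auto

lemma cr_less: assumes "cf A k F" "cf A k G" shows "cr A k (\<lambda>xs. F xs < G xs)"
proof (rule cr_intro)
  show "cf A k (\<lambda>xs. 1 - (1 - (G xs - F xs)))" by (intro cf_monus cf_const assms)
qed auto

lemma cr_not: assumes "cr A k R" shows "cr A k (\<lambda>xs. \<not> R xs)"
proof (rule cr_intro)
  show "cf A k (\<lambda>xs. 1 - (if R xs then 1 else 0))" using assms unfolding cr_def by (intro cf_monus cf_const)
qed auto

lemma cr_and: assumes "cr A k R" "cr A k S" shows "cr A k (\<lambda>xs. R xs \<and> S xs)"
proof (rule cr_intro)
  show "cf A k (\<lambda>xs. (if R xs then 1 else 0) * (if S xs then 1 else 0))" using assms unfolding cr_def by (intro cf_mult)
qed auto

lemma cr_or: "cr A k R \<Longrightarrow> cr A k S \<Longrightarrow> cr A k (\<lambda>xs. R xs \<or> S xs)"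
  using cr_not[OF cr_and[OF cr_not cr_not]] by simp

lemma cr_imp: "cr A k R \<Longrightarrow> cr A k S \<Longrightarrow> cr A k (\<lambda>xs. R xs \<longrightarrow> S xs)"
  using cr_or[OF cr_not] by simp

lemma cr_iff: assumes "cr A k R" "cr A k S" shows "cr A k (\<lambda>xs. R xs \<longleftrightarrow> S xs)"
proof -
  have "cr A k (\<lambda>xs. (R xs \<longrightarrow> S xs) \<and> (S xs \<longrightarrow> R xs))" by (intro cr_and cr_imp assms)
  then show ?thesis by (rule cr_cong) blast
qed

lemma cr_const: "cr A k (\<lambda>xs. b)"
  unfolding cr_def by (cases b) (simp_all add: cf_const)

lemma cf_if: assumes "cr A k R" "cf A k F" "cf A k G" shows "cf A k (\<lambda>xs. if R xs then F xs else G xs)"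
proof -
  have "cf A k (\<lambda>xs. (if R xs then 1 else 0) * F xs + (1 - (if R xs then 1 else 0)) * G xs)"
    using assms unfolding cr_def by (intro cf_add cf_mult cf_monus cf_const)
  then show ?thesis by (rule cf_cong) auto
qed

lemma cr_le: "cf A k F \<Longrightarrow> cf A k G \<Longrightarrow> cr A k (\<lambda>xs. F xs \<le> G xs)"
  using cr_not[OF cr_less[of A k G F]] by (simp add: not_less)

lemma cr_ne: "cf A k F \<Longrightarrow> cf A k G \<Longrightarrow> cr A k (\<lambda>xs. F xs \<noteq> G xs)"
  using cr_not[OF cr_eq] by simp

lemma cf1_triangle: "cf1 A triangle"
proof -
  have "cf1 A (\<lambda>n. rec_nat 0 (\<lambda>m u. u + Suc m) n)"
    by (rule cf_rec0) (intro cf_add cf_suc cf_var; simp)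
  moreover have "rec_nat 0 (\<lambda>m u. u + Suc m) n = triangle n" for n by (induction n) auto
  ultimately show ?thesis by simp
qed

lemma cf_iter:
  assumes "cf1 A h" "cf A k N" "cf A k X"
  shows "cf A k (\<lambda>xs. (h ^^ N xs) (X xs))"
proof -
  have "cf2 A (\<lambda>n y. rec_nat y (\<lambda>m u. h u) n)"
    using cf_rec1[of A "\<lambda>y. y" "\<lambda>m u y. h u"] cf_var[of _ 1] cf1_app[OF assms(1) cf_var[of 1 3]]
    by simp
  moreover have "rec_nat y (\<lambda>m u. h u) n = (h ^^ n) y" for n y by (induction n) auto
  ultimately have "cf2 A (\<lambda>n y. (h ^^ n) y)" by simp
  from cf2_app[OF this assms(2,3)] show ?thesis .
qed

primrec dg :: "nat \<Rightarrow> nat" where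
  "dg 0 = 0"
| "dg (Suc a) = (if a - triangle (dg a) = dg a then Suc (dg a) else dg a)"

lemma dg_inv: "triangle (dg a) \<le> a \<and> a \<le> triangle (dg a) + dg a"
proof (induction a)
  case 0 then show ?case by simp
next
  case (Suc a)
  show ?case
  proof (cases "a - triangle (dg a) = dg a")
    case True
    then have "a = triangle (dg a) + dg a" using Suc by linarith
    then show ?thesis using True by simp
  next
    case False
    then have "a < triangle (dg a) + dg a" using Suc by linarith
    then show ?thesis using False Suc by simp
  qed
qed

lemma prod_decode_dg: "prod_decode a = (a - triangle (dg a), dg a - (a - triangle (dg a)))"
proof -
  have "prod_encode (a - triangle (dg a), dg a - (a - triangle (dg a))) = a"
    using dg_inv[of a] by (simp add: prod_encode_def)
  then show ?thesis by (metis prod_encode_inverse)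
qed

lemma cf1_dg: "cf1 A dg"
proof -
  have "cf1 A (\<lambda>n. rec_nat 0 (\<lambda>a u. if a - triangle u = u then Suc u else u) n)"
    by (rule cf_rec0) (intro cf_if cr_eq cf_monus cf1_app[OF cf1_triangle] cf_suc cf_var; simp)
  moreover have "rec_nat 0 (\<lambda>a u. if a - triangle u = u then Suc u else u) n = dg n" for n
    by (induction n) auto
  ultimately show ?thesis by simp
qed

definition pfst :: "nat \<Rightarrow> nat" where "pfst a = fst (prod_decode a)"
definition psnd :: "nat \<Rightarrow> nat" where "psnd a = snd (prod_decode a)"

lemma cf1_pfst: "cf1 A pfst"
proof -
  have "cf A 1 (\<lambda>xs. xs!0 - triangle (dg (xs!0)))"
    by (intro cf_monus cf1_app[OF cf1_triangle] cf1_app[OF cf1_dg] cf_var) simp_all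
  then show ?thesis unfolding cf1_def pfst_def by (subst prod_decode_dg) simp
qed

lemma cf1_psnd: "cf1 A psnd"
proof -
  have "cf A 1 (\<lambda>xs. dg (xs!0) - (xs!0 - triangle (dg (xs!0))))"
    by (intro cf_monus cf1_app[OF cf1_triangle] cf1_app[OF cf1_dg] cf_var) simp_all
  then show ?thesis unfolding cf1_def psnd_def by (subst prod_decode_dg) simp
qed

lemma pfst_enc[simp]: "pfst (prod_encode (x, y)) = x" by (simp add: pfst_def)
lemma psnd_enc[simp]: "psnd (prod_encode (x, y)) = y" by (simp add: psnd_def)

definition chd :: "nat \<Rightarrow> nat" where "chd c = pfst (c - 1)"
definition ctl :: "nat \<Rightarrow> nat" where "ctl c = psnd (c - 1)"
definition cnth :: "nat \<Rightarrow> nat \<Rightarrow> nat" where "cnth c i = chd ((ctl ^^ i) c)"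

lemma cf1_chd: "cf1 A chd"
  unfolding cf1_def chd_def by (intro cf1_app[OF cf1_pfst] cf_monus cf_var cf_const) simp
lemma cf1_ctl: "cf1 A ctl"
  unfolding cf1_def ctl_def by (intro cf1_app[OF cf1_psnd] cf_monus cf_var cf_const) simp

lemma cf_ctl_iter: "cf A k N \<Longrightarrow> cf A k X \<Longrightarrow> cf A k (\<lambda>xs. (ctl ^^ N xs) (X xs))"
  by (rule cf_iter[OF cf1_ctl])

lemma cf_cnth: "cf A k X \<Longrightarrow> cf A k N \<Longrightarrow> cf A k (\<lambda>xs. cnth (X xs) (N xs))"
  unfolding cnth_def by (intro cf1_app[OF cf1_chd] cf_ctl_iter)

lemma ctl_Suc[simp]: "ctl (Suc (prod_encode (x, y))) = y"
  by (simp add: ctl_def)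
lemma chd_Suc[simp]: "chd (Suc (prod_encode (x, y))) = x"
  by (simp add: chd_def)
lemma ctl_cons: "ctl (list_encode (x # xs)) = list_encode xs"
  by simp
lemma chd_cons: "chd (list_encode (x # xs)) = x"
  by simp
lemma ctl_nil[simp]: "ctl 0 = 0"
  by (simp add: ctl_def psnd_def prod_decode_def prod_decode_aux.simps)

lemma ctl_iter: "(ctl ^^ i) (list_encode xs) = list_encode (drop i xs)"
proof (induction i)
  case 0 then show ?case by simp
next
  case (Suc i)
  show ?case
  proof (cases "drop i xs")
    case Nil then show ?thesis using Suc by (simp add: drop_Suc drop_tl)
  next
    case (Cons y ys) then show ?thesis using Suc
      by (simp add: drop_Suc drop_tl)
  qed
qed

lemma list_encode_0_iff: "list_encode xs = 0 \<longleftrightarrow> xs = []"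
  by (cases xs) auto

lemma ctl_iter_ne: "(ctl ^^ i) (list_encode xs) \<noteq> 0 \<longleftrightarrow> i < length xs"
  by (simp add: ctl_iter list_encode_0_iff not_le)

lemma cnth_enc: "i < length xs \<Longrightarrow> cnth (list_encode xs) i = xs ! i"
  by (simp add: cnth_def ctl_iter Cons_nth_drop_Suc[symmetric])

lemma cf1_mod2: "cf1 A (\<lambda>n. n mod 2)"
proof -
  have "cf1 A (\<lambda>n. rec_nat 0 (\<lambda>m u. 1 - u) n)"
    by (rule cf_rec0) (intro cf_monus cf_const cf_var; simp)
  moreover have "rec_nat 0 (\<lambda>m u. 1 - u) n = n mod 2" for n :: nat
    by (induction n) (auto, presburger)
  ultimately show ?thesis by simp
qed

lemma cf1_div2: "cf1 A (\<lambda>n. n div 2)"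
proof -
  have "cf1 A (\<lambda>n. rec_nat 0 (\<lambda>m u. u + m mod 2) n)"
    by (rule cf_rec0) (intro cf_add cf1_app[OF cf1_mod2] cf_var; simp)
  moreover have "rec_nat 0 (\<lambda>m u. u + m mod 2) n = n div 2" for n :: nat
    by (induction n) (auto, presburger)
  ultimately show ?thesis by simp
qed




inductive ev2 :: "(nat \<Rightarrow> nat) \<Rightarrow> rf \<Rightarrow> nat list \<Rightarrow> nat \<Rightarrow> bool" for ora :: "nat \<Rightarrow> nat" where
  ev2_Zr: "ev2 ora Zr xs 0"
| ev2_Sc: "ev2 ora Sc xs (Suc (arg0 xs))"
| ev2_Pj: "ev2 ora (Pj i) xs (if i < length xs then xs ! i else 0)"
| ev2_Cn: "length ys = length gs \<Longrightarrow> (\<forall>i<length gs. ev2 ora (gs ! i) xs (ys ! i))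
           \<Longrightarrow> ev2 ora f ys v \<Longrightarrow> ev2 ora (Cn f gs) xs v"
| ev2_Pr0: "ev2 ora f xs v \<Longrightarrow> ev2 ora (Pr f g) (0 # xs) v"
| ev2_PrS: "ev2 ora (Pr f g) (n # xs) u \<Longrightarrow> ev2 ora g (n # u # xs) v
           \<Longrightarrow> ev2 ora (Pr f g) (Suc n # xs) v"
| ev2_Mn: "ev2 ora f (n # xs) 0 \<Longrightarrow> (\<forall>m<n. \<exists>u. u \<noteq> 0 \<and> ev2 ora f (m # xs) u)
           \<Longrightarrow> ev2 ora (Mn f) xs n"
| ev2_Orc: "ora (arg0 xs) < 2 \<Longrightarrow> ev2 ora Orc xs (ora (arg0 xs))"

lemma ev2_mono:
  assumes "ev2 ora e xs v" "\<forall>a. ora a < 2 \<longrightarrow> ora' a = ora a"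
  shows "ev2 ora' e xs v"
  using assms(1)
proof (induction rule: ev2.induct)
  case (ev2_Cn ys gs xs f v) then show ?case by (auto intro: ev2.ev2_Cn)
next
  case (ev2_Mn f n xs) then show ?case by (blast intro: ev2.ev2_Mn)
next
  case (ev2_Orc xs) then show ?case using assms(2) ev2.ev2_Orc[of ora' xs] by simp
next
  case (ev2_Pj i xs) then show ?case by (rule ev2.ev2_Pj)
next
  case (ev2_Zr xs) then show ?case by (rule ev2.ev2_Zr)
next
  case (ev2_Sc xs) then show ?case by (rule ev2.ev2_Sc)
next
  case (ev2_Pr0 f xs v g) show ?case by (rule ev2.ev2_Pr0[OF ev2_Pr0.IH])
next
  case (ev2_PrS f g n xs u v) show ?case by (rule ev2.ev2_PrS[OF ev2_PrS.IH])
qed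

definition chi :: "nat set \<Rightarrow> nat \<Rightarrow> nat" where "chi A a = (if a \<in> A then 1 else 0)"

lemma ev2_ev:
  assumes "ev2 ora e xs v" "\<forall>a. ora a < 2 \<longrightarrow> ora a = chi A a"
  shows "ev A e xs v"
  using assms(1)
proof (induction rule: ev2.induct)
  case (ev2_Cn ys gs xs f v) then show ?case by (auto intro: ev.ev_Cn)
next
  case (ev2_Mn f n xs) then show ?case by (blast intro: ev.ev_Mn)
next
  case (ev2_Orc xs) then show ?case using assms(2) ev.ev_Orc[of A xs] by (simp add: chi_def)
next
  case (ev2_Pj i xs) then show ?case by (rule ev.ev_Pj)
next
  case (ev2_Zr xs) then show ?case by (rule ev.ev_Zr)
next
  case (ev2_Sc xs) then show ?case by (rule ev.ev_Sc)
next
  case (ev2_Pr0 f xs v g) show ?case by (rule ev.ev_Pr0[OF ev2_Pr0.IH])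
next
  case (ev2_PrS f g n xs u v) show ?case by (rule ev.ev_PrS[OF ev2_PrS.IH])
qed

lemma bchoice_mono:
  assumes "\<forall>m<(n::nat). \<exists>N::nat. \<forall>N'\<ge>N. P m N'"
  shows "\<exists>N. \<forall>m<n. \<forall>N'\<ge>N. P m N'"
  using assms
proof (induction n)
  case 0 then show ?case by auto
next
  case (Suc n)
  then obtain N1 where N1: "\<forall>m<n. \<forall>N'\<ge>N1. P m N'" by auto
  obtain N2 where N2: "\<forall>N'\<ge>N2. P n N'" using Suc.prems by auto
  show ?case
    by (rule exI[of _ "max N1 N2"]) (metis N1 N2 less_Suc_eq max.boundedE)
qed

lemma ev_ev2:
  assumes "ev A e xs v"
  shows "\<exists>N. \<forall>N'\<ge>N. \<forall>ora. (\<forall>a<N'. ora a = chi A a) \<longrightarrow> ev2 ora e xs v"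
  using assms
proof (induction rule: ev.induct)
  case (ev_Zr xs) then show ?case by (blast intro: ev2.ev2_Zr)
next
  case (ev_Sc xs) then show ?case by (blast intro: ev2.ev2_Sc)
next
  case (ev_Pj i xs) then show ?case by (blast intro: ev2.ev2_Pj)
next
  case (ev_Cn ys gs xs f v)
  obtain N1 where N1: "\<forall>i<length gs. \<forall>N'\<ge>N1. \<forall>ora. (\<forall>a<N'. ora a = chi A a) \<longrightarrow> ev2 ora (gs ! i) xs (ys ! i)"
    using bchoice_mono[of "length gs" "\<lambda>i N'. \<forall>ora. (\<forall>a<N'. ora a = chi A a) \<longrightarrow> ev2 ora (gs ! i) xs (ys ! i)"]
      ev_Cn.IH(1) by blast
  obtain N2 where N2: "\<forall>N'\<ge>N2. \<forall>ora. (\<forall>a<N'. ora a = chi A a) \<longrightarrow> ev2 ora f ys v" using ev_Cn.IH(2) by auto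
  show ?case
  proof (intro exI[of _ "max N1 N2"] allI impI)
    fix N' ora assume a: "max N1 N2 \<le> N'" "\<forall>a<N'. ora a = chi A a"
    show "ev2 ora (Cn f gs) xs v"
    proof (rule ev2.ev2_Cn[where ys=ys])
      show "length ys = length gs" by (rule ev_Cn.hyps(1))
      show "\<forall>i<length gs. ev2 ora (gs ! i) xs (ys ! i)" using N1 a by auto
      show "ev2 ora f ys v" using N2 a by auto
    qed
  qed
next
  case (ev_Pr0 f xs v g) then show ?case by (blast intro: ev2.ev2_Pr0)
next
  case (ev_PrS f g n xs u v)
  then obtain N1 N2 where "\<forall>N'\<ge>N1. \<forall>ora. (\<forall>a<N'. ora a = chi A a) \<longrightarrow> ev2 ora (Pr f g) (n # xs) u"
    "\<forall>N'\<ge>N2. \<forall>ora. (\<forall>a<N'. ora a = chi A a) \<longrightarrow> ev2 ora g (n # u # xs) v" by auto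
  then show ?case
    by (intro exI[of _ "max N1 N2"]) (meson ev2.ev2_PrS max.boundedE)
next
  case (ev_Mn f n xs)
  have "\<forall>m<n. \<exists>N. \<forall>N'\<ge>N. \<exists>u. u \<noteq> 0 \<and> (\<forall>ora. (\<forall>a<N'. ora a = chi A a) \<longrightarrow> ev2 ora f (m # xs) u)"
  proof (intro allI impI)
    fix m assume "m < n"
    then obtain u N where "u \<noteq> 0" "\<forall>N'\<ge>N. \<forall>ora. (\<forall>a<N'. ora a = chi A a) \<longrightarrow> ev2 ora f (m # xs) u"
      using ev_Mn.IH(2) by blast
    then show "\<exists>N. \<forall>N'\<ge>N. \<exists>u. u \<noteq> 0 \<and> (\<forall>ora. (\<forall>a<N'. ora a = chi A a) \<longrightarrow> ev2 ora f (m # xs) u)"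
      by blast
  qed
  from bchoice_mono[OF this] obtain N1 where N1: "\<forall>m<n. \<forall>N'\<ge>N1. \<exists>u. u \<noteq> 0 \<and> (\<forall>ora. (\<forall>a<N'. ora a = chi A a) \<longrightarrow> ev2 ora f (m # xs) u)"
    by blast
  obtain N2 where N2: "\<forall>N'\<ge>N2. \<forall>ora. (\<forall>a<N'. ora a = chi A a) \<longrightarrow> ev2 ora f (n # xs) 0"
    using ev_Mn.IH(1) by auto
  show ?case
  proof (intro exI[of _ "max N1 N2"] allI impI)
    fix N' ora assume a: "max N1 N2 \<le> N'" "\<forall>a<N'. ora a = chi A a"
    show "ev2 ora (Mn f) xs n"
    proof (rule ev2.ev2_Mn)
      show "ev2 ora f (n # xs) 0" using N2 a by auto
      show "\<forall>m<n. \<exists>u. u \<noteq> 0 \<and> ev2 ora f (m # xs) u"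
      proof (intro allI impI)
        fix m assume "m < n"
        then have "\<exists>u. u \<noteq> 0 \<and> (\<forall>ora. (\<forall>a<N'. ora a = chi A a) \<longrightarrow> ev2 ora f (m # xs) u)"
          using N1 a(1) by simp
        then obtain u where "u \<noteq> 0" "\<forall>ora. (\<forall>a<N'. ora a = chi A a) \<longrightarrow> ev2 ora f (m # xs) u"
          by blast
        then show "\<exists>u. u \<noteq> 0 \<and> ev2 ora f (m # xs) u" using a by blast
      qed
    qed
  qed
next
  case (ev_Orc xs)
  show ?case
  proof (intro exI[of _ "Suc (arg0 xs)"] allI impI)
    fix N' ora assume "Suc (arg0 xs) \<le> N'" "\<forall>a<N'. ora a = chi A a"
    then have "ora (arg0 xs) = (if arg0 xs \<in> A then 1 else 0)" by (simp add: chi_def)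
    then show "ev2 ora Orc xs (if arg0 xs \<in> A then 1 else 0)"
      using ev2.ev2_Orc[of ora xs] by simp
  qed
qed

inductive_cases evE_Zr: "ev A Zr xs w"
inductive_cases evE_Sc: "ev A Sc xs w"
inductive_cases evE_Pj: "ev A (Pj i) xs w"
inductive_cases evE_Cn: "ev A (Cn f gs) xs w"
inductive_cases evE_Pr0: "ev A (Pr f g) (0 # xs) w"
inductive_cases evE_PrS: "ev A (Pr f g) (Suc n # xs) w"
inductive_cases evE_Mn: "ev A (Mn f) xs w"
inductive_cases evE_Orc: "ev A Orc xs w"

lemma ev_det:
  assumes "ev A e xs v"
  shows "ev A e xs w \<Longrightarrow> v = w"
  using assms
proof (induction arbitrary: w rule: ev.induct)
  case (ev_Cn ys gs xs f v)
  from ev_Cn.prems obtain ys' where ys': "length ys' = length gs" "\<forall>i<length gs. ev A (gs ! i) xs (ys' ! i)" "ev A f ys' w"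
    by (rule evE_Cn) auto
  have "ys = ys'" using ev_Cn.IH(1) ys' ev_Cn.hyps(1) by (metis nth_equalityI)
  then show ?case using ev_Cn.IH(2) ys' by auto
next
  case (ev_Pr0 f xs v g) from ev_Pr0.prems show ?case by (rule evE_Pr0) (use ev_Pr0.IH in auto)
next
  case (ev_PrS f g n xs u v)
  from ev_PrS.prems obtain u' where "ev A (Pr f g) (n # xs) u'" "ev A g (n # u' # xs) w"
    by (rule evE_PrS) auto
  then show ?case using ev_PrS.IH by auto
next
  case (ev_Mn f n xs)
  from ev_Mn.prems have w: "ev A f (w # xs) 0" "\<forall>m<w. \<exists>u. u \<noteq> 0 \<and> ev A f (m # xs) u"
    by (rule evE_Mn; auto)+
  show ?case
  proof (rule ccontr)
    assume "n \<noteq> w"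
    then consider "n < w" | "w < n" by linarith
    then show False
    proof cases
      case 1 then obtain u where "u \<noteq> 0" "ev A f (n # xs) u" using w by auto
      then show False using ev_Mn.IH(1) by auto
    next
      case 2 then obtain u where "u \<noteq> 0" "\<forall>w'. ev A f (w # xs) w' \<longrightarrow> u = w'" using ev_Mn.IH(2) by blast
      then show False using w by auto
    qed
  qed
next
  case (ev_Zr xs) then show ?case by (auto elim: evE_Zr)
next
  case (ev_Sc xs) then show ?case by (auto elim: evE_Sc)
next
  case (ev_Pj i xs) then show ?case by (auto elim: evE_Pj)
next
  case (ev_Orc xs) then show ?case by (auto elim: evE_Orc)
qed




fun prec :: "(nat list \<Rightarrow> nat) \<Rightarrow> (nat list \<Rightarrow> nat) \<Rightarrow> nat \<Rightarrow> nat list \<Rightarrow> nat" where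
  "prec F G 0 ys = F ys"
| "prec F G (Suc m) ys = (let u = prec F G m ys in if u = 0 then 0 else G (m # (u - 1) # ys))"

fun mst :: "(nat list \<Rightarrow> nat) \<Rightarrow> nat list \<Rightarrow> nat \<Rightarrow> nat" where
  "mst F xs 0 = 0"
| "mst F xs (Suc m) = (let s = mst F xs m in if s \<noteq> 0 then s else
     (let z = F (m # xs) in if z = 0 then 1 else if z = 1 then m + 2 else 0))"

primrec cev :: "rf \<Rightarrow> (nat \<Rightarrow> nat) \<Rightarrow> nat \<Rightarrow> nat list \<Rightarrow> nat" where
  "cev Zr ora t xs = 1"
| "cev Sc ora t xs = Suc (Suc (arg0 xs))"
| "cev (Pj i) ora t xs = Suc (if i < length xs then xs ! i else 0)"
| "cev (Cn f gs) ora t xs = (let zs = map (\<lambda>g. cev g ora t xs) gs in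
     if 0 \<in> set zs then 0 else cev f ora t (map (\<lambda>z. z - 1) zs))"
| "cev (Pr f g) ora t xs = (case xs of [] \<Rightarrow> 0 | n # ys \<Rightarrow> prec (cev f ora t) (cev g ora t) n ys)"
| "cev (Mn f) ora t xs = mst (cev f ora t) xs t - 1"
| "cev Orc ora t xs = (if ora (arg0 xs) < 2 then Suc (ora (arg0 xs)) else 0)"

lemma prec_sound:
  assumes "\<And>ys v. F ys = Suc v \<Longrightarrow> ev2 ora f ys v"
    and "\<And>ys v. G ys = Suc v \<Longrightarrow> ev2 ora g ys v"
  shows "prec F G n ys = Suc v \<Longrightarrow> ev2 ora (Pr f g) (n # ys) v"
proof (induction n arbitrary: v)
  case 0 then show ?case using assms(1) by (auto intro: ev2_Pr0)
next
  case (Suc n)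
  then obtain u where u: "prec F G n ys = Suc u" "G (n # u # ys) = Suc v"
    by (cases "prec F G n ys") (auto simp: Let_def)
  then show ?case using Suc.IH assms(2) by (auto intro: ev2_PrS)
qed

lemma mst_found:
  "mst F xs t = Suc (Suc n) \<Longrightarrow> F (n # xs) = 1 \<and> (\<forall>m<n. F (m # xs) \<ge> 2) \<and> n < t"
proof (induction t arbitrary: n)
  case 0 then show ?case by simp
next
  case (Suc t)
  show ?case
  proof (cases "mst F xs t = 0")
    case False
    then show ?thesis using Suc by (auto simp: Let_def)
  next
    case True
    have z: "\<forall>m<t. F (m # xs) \<ge> 2" using True
    proof (induction t)
      case 0 then show ?case by simp
    next
      case (Suc t)
      then have "mst F xs t = 0" by (auto simp: Let_def split: if_splits)
      moreover from Suc.prems this have "F (t # xs) \<ge> 2" by (auto simp: Let_def split: if_splits)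
      ultimately show ?case using Suc.IH less_Suc_eq by auto
    qed
    from Suc.prems True have "n = t" "F (t # xs) = 1" by (auto simp: Let_def split: if_splits)
    then show ?thesis using z by auto
  qed
qed

lemma cev_sound: "cev e ora t xs = Suc v \<Longrightarrow> ev2 ora e xs v"
proof (induction e arbitrary: xs v)
  case Zr then show ?case using ev2_Zr by simp
next
  case Sc then show ?case using ev2_Sc[of ora xs] by simp
next
  case (Pj i) then show ?case using ev2_Pj[of ora i xs] by simp
next
  case Orc then show ?case using ev2_Orc[of ora xs] by (auto split: if_splits)
next
  case (Cn f gs)
  define zs where "zs = map (\<lambda>g. cev g ora t xs) gs"
  have nz: "0 \<notin> set zs" and fv: "cev f ora t (map (\<lambda>z. z - 1) zs) = Suc v"
    using Cn.prems by (auto simp: zs_def Let_def split: if_splits)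
  show ?case
  proof (rule ev2_Cn)
    show "length (map (\<lambda>z. z - 1) zs) = length gs" by (simp add: zs_def)
    show "\<forall>i<length gs. ev2 ora (gs ! i) xs (map (\<lambda>z. z - 1) zs ! i)"
    proof (intro allI impI)
      fix i assume i: "i < length gs"
      have "zs ! i \<in> set zs" using i by (simp add: zs_def)
      then have "zs ! i \<noteq> 0" using nz by metis
      then have "cev (gs ! i) ora t xs = Suc (map (\<lambda>z. z - 1) zs ! i)" using i by (simp add: zs_def)
      then show "ev2 ora (gs ! i) xs (map (\<lambda>z. z - 1) zs ! i)" using Cn.IH(2) i by (meson nth_mem)
    qed
    show "ev2 ora f (map (\<lambda>z. z - 1) zs) v" using Cn.IH(1) fv by blast
  qed
next
  case (Pr f g)
  then obtain n ys where xs: "xs = n # ys" by (cases xs) auto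
  then show ?case using Pr prec_sound[of "cev f ora t" ora f "cev g ora t" g n ys v] by simp
next
  case (Mn f)
  then have "mst (cev f ora t) xs t = Suc (Suc v)" by simp
  from mst_found[OF this] have a: "cev f ora t (v # xs) = Suc 0" and b: "\<forall>m<v. cev f ora t (m # xs) \<ge> 2" by auto
  show ?case
  proof (rule ev2_Mn)
    show "ev2 ora f (v # xs) 0" using Mn.IH a by blast
    show "\<forall>m<v. \<exists>u. u \<noteq> 0 \<and> ev2 ora f (m # xs) u"
    proof (intro allI impI)
      fix m assume "m < v"
      then have "cev f ora t (m # xs) \<ge> 2" using b by blast
      then obtain u where u: "cev f ora t (m # xs) = Suc u" "u \<noteq> 0"
        by (cases "cev f ora t (m # xs)") auto
      then show "\<exists>u. u \<noteq> 0 \<and> ev2 ora f (m # xs) u" using Mn.IH by blast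
    qed
  qed
qed

lemma mst_zero: "(\<forall>m<n. F (m # xs) \<ge> 2) \<Longrightarrow> t \<le> n \<Longrightarrow> mst F xs t = 0"
proof (induction t)
  case 0 then show ?case by simp
next
  case (Suc t)
  have f2: "F (t # xs) \<ge> 2" using Suc.prems by auto
  have "mst F xs t = 0" using Suc by auto
  then show ?case using f2 by (simp add: Let_def)
qed

lemma mst_find:
  assumes "\<forall>m<n. F (m # xs) \<ge> 2" "F (n # xs) = 1" "n < t"
  shows "mst F xs t = Suc (Suc n)"
  using assms(3)
proof (induction t)
  case 0 then show ?case by simp
next
  case (Suc t)
  show ?case
  proof (cases "n < t")
    case True then show ?thesis using Suc by (simp add: Let_def)
  next
    case False
    then have "t = n" using Suc by simp
    then show ?thesis using mst_zero[OF assms(1), of n] assms(2) by (simp add: Let_def)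
  qed
qed

lemma prec_Suc_eq: "prec F G n ys = Suc u \<Longrightarrow> G (n # u # ys) = Suc v \<Longrightarrow> prec F G (Suc n) ys = Suc v"
  by (simp add: Let_def)

lemma cev_complete:
  assumes "ev2 ora e xs v"
  shows "\<exists>T. \<forall>t\<ge>T. cev e ora t xs = Suc v"
  using assms
proof (induction rule: ev2.induct)
  case (ev2_Cn ys gs xs f v)
  have "\<forall>i<length gs. \<exists>T. \<forall>t\<ge>T. cev (gs ! i) ora t xs = Suc (ys ! i)"
  proof (intro allI impI)
    fix i assume "i < length gs"
    then show "\<exists>T. \<forall>t\<ge>T. cev (gs ! i) ora t xs = Suc (ys ! i)" using ev2_Cn.IH(1) by simp
  qed
  from bchoice_mono[OF this] obtain T1 where T1: "\<forall>i<length gs. \<forall>t\<ge>T1. cev (gs ! i) ora t xs = Suc (ys ! i)"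
    by blast
  obtain T2 where T2: "\<forall>t\<ge>T2. cev f ora t ys = Suc v" using ev2_Cn.IH(2) by auto
  show ?case
  proof (intro exI[of _ "max T1 T2"] allI impI)
    fix t assume t: "max T1 T2 \<le> t"
    have zs: "map (\<lambda>g. cev g ora t xs) gs = map Suc ys"
      using T1 t ev2_Cn.hyps(1) by (intro nth_equalityI) auto
    have "0 \<notin> set (map Suc ys)" by auto
    moreover have "map (\<lambda>z. z - 1) (map Suc ys) = ys" by (induction ys) auto
    ultimately show "cev (Cn f gs) ora t xs = Suc v"
      using zs T2 t by (simp only: cev.simps Let_def) simp
  qed
next
  case (ev2_Pr0 f xs v g)
  then obtain T where "\<forall>t\<ge>T. cev f ora t xs = Suc v" by blast
  then have "\<forall>t\<ge>T. cev (Pr f g) ora t (0 # xs) = Suc v" by simp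
  then show ?case by blast
next
  case (ev2_PrS f g n xs u v)
  then obtain T1 T2 where "\<forall>t\<ge>T1. cev (Pr f g) ora t (n # xs) = Suc u" "\<forall>t\<ge>T2. cev g ora t (n # u # xs) = Suc v"
    by blast
  then have "\<forall>t\<ge>max T1 T2. cev (Pr f g) ora t (Suc n # xs) = Suc v" by (simp add: Let_def)
  then show ?case by blast
next
  case (ev2_Mn f n xs)
  have "\<forall>m<n. \<exists>T. \<forall>t\<ge>T. cev f ora t (m # xs) \<ge> 2"
  proof (intro allI impI)
    fix m assume "m < n"
    then obtain u T where "u \<noteq> 0" "\<forall>t\<ge>T. cev f ora t (m # xs) = Suc u" using ev2_Mn.IH(2) by blast
    then have "\<forall>t\<ge>T. cev f ora t (m # xs) \<ge> 2" by auto
    then show "\<exists>T. \<forall>t\<ge>T. cev f ora t (m # xs) \<ge> 2" by blast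
  qed
  from bchoice_mono[OF this] obtain T1 where T1: "\<forall>m<n. \<forall>t\<ge>T1. cev f ora t (m # xs) \<ge> 2"
    by blast
  obtain T2 where T2: "\<forall>t\<ge>T2. cev f ora t (n # xs) = Suc 0" using ev2_Mn.IH(1) by blast
  show ?case
  proof (intro exI[of _ "max (max T1 T2) (Suc n)"] allI impI)
    fix t assume t: "max (max T1 T2) (Suc n) \<le> t"
    have "mst (cev f ora t) xs t = Suc (Suc n)"
      by (rule mst_find) (use T1 T2 t in auto)
    then show "cev (Mn f) ora t xs = Suc n" by simp
  qed
next
  case (ev2_Zr xs) show ?case by simp
next
  case (ev2_Sc xs) show ?case by simp
next
  case (ev2_Pj i xs) show ?case by simp
next
  case (ev2_Orc xs) then show ?case by simp
qed




definition colq :: "nat \<Rightarrow> nat \<Rightarrow> nat" where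
  "colq c b = (if pfst b < psnd b then
      (if (ctl ^^ psnd b) (psnd c) \<noteq> 0 then (if cnth (cnth (pfst c) (psnd b)) (pfst b) = 1 then 1 else 0) else 2)
    else 0)"

definition orq :: "nat set \<Rightarrow> nat \<Rightarrow> nat \<Rightarrow> nat" where
  "orq P c a = (if a mod 2 = 0 then colq c (a div 2) else chi P (a div 2))"

lemma cf_chi: "cf A k F \<Longrightarrow> cf A k (\<lambda>xs. chi A (F xs))"
proof -
  assume "cf A k F"
  moreover have "cf1 A (chi A)" using cf_orc[of A] unfolding cf1_def chi_def .
  ultimately show ?thesis using cf1_app by blast
qed

lemma cf_colq: "cf A k C \<Longrightarrow> cf A k B \<Longrightarrow> cf A k (\<lambda>xs. colq (C xs) (B xs))"
  unfolding colq_def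
  by (intro cf_if cr_less cr_ne cr_eq cf_const cf1_app[OF cf1_pfst] cf1_app[OF cf1_psnd]
        cf_ctl_iter cf_cnth; assumption?)

lemma cf_orq: "cf P k C \<Longrightarrow> cf P k B \<Longrightarrow> cf P k (\<lambda>xs. orq P (C xs) (B xs))"
  unfolding orq_def
  by (intro cf_if cr_eq cf_colq cf_chi cf1_app[OF cf1_mod2] cf1_app[OF cf1_div2] cf_const; assumption?)

lemma drop_map: "length L = j + n \<Longrightarrow> drop j L = map (\<lambda>i. L ! (i + j)) [0..<n]"
  by (rule nth_equalityI) (auto simp: add.commute)

lemma cf_vars: "j + n \<le> k \<Longrightarrow> \<forall>F\<in>set (map (\<lambda>i L. L ! (i + j)) [0..<n]). cf A k F"
  by (auto intro!: cf_var)

lemma prec_rec: "prec F G n ys = rec_nat (F ys) (\<lambda>m u. if u = 0 then 0 else G (m # (u - 1) # ys)) n"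
  by (induction n) (auto simp: Let_def)

lemma mst_rec: "mst F xs t = rec_nat 0 (\<lambda>m s. if s \<noteq> 0 then s else
     (if F (m # xs) = 0 then 1 else if F (m # xs) = 1 then m + 2 else 0)) t"
  by (induction t) (auto simp: Let_def)

lemma cr_all_nz: "r \<le> m \<Longrightarrow> cr A (m + 2) (\<lambda>M. \<forall>i<r. M ! (i + 2) \<noteq> 0)"
proof (induction r)
  case 0 then show ?case using cr_const[of A "m+2" True] by simp
next
  case (Suc r)
  have "cr A (m + 2) (\<lambda>M. (\<forall>i<r. M ! (i + 2) \<noteq> 0) \<and> M ! (r + 2) \<noteq> 0)"
    using Suc by (intro cr_and cr_ne cf_var cf_const) auto
  then show ?case by (rule cr_cong) (auto simp: less_Suc_eq)
qed

lemma cev_cf: "cf P (Suc (Suc k)) (\<lambda>L. cev e (orq P (L ! 0)) (L ! 1) (drop 2 L))"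
proof (induction e arbitrary: k)
  case Zr then show ?case by (simp add: cf_const)
next
  case Sc
  show ?case
  proof (cases k)
    case 0
    have "cf P (Suc (Suc k)) (\<lambda>L. 2)" by (rule cf_const)
    then show ?thesis by (rule cf_cong) (auto simp: 0 arg0_def)
  next
    case (Suc k')
    have "cf P (Suc (Suc k)) (\<lambda>L. Suc (Suc (L ! 2)))" by (intro cf_suc cf_var) (simp add: Suc)
    then show ?thesis by (rule cf_cong) (auto simp: Suc arg0_def hd_drop_conv_nth)
  qed
next
  case (Pj i)
  show ?case
  proof (cases "i < k")
    case True
    have "cf P (Suc (Suc k)) (\<lambda>L. Suc (L ! (i + 2)))" by (intro cf_suc cf_var) (use True in simp)
    then show ?thesis by (rule cf_cong) (use True in \<open>auto simp: add.commute\<close>)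
  next
    case False
    have "cf P (Suc (Suc k)) (\<lambda>L. 1)" by (rule cf_const)
    then show ?thesis by (rule cf_cong) (use False in auto)
  qed
next
  case Orc
  show ?case
  proof (cases k)
    case 0
    have "cf P (Suc (Suc k)) (\<lambda>L. if orq P (L ! 0) 0 < 2 then Suc (orq P (L ! 0) 0) else 0)"
      by (intro cf_if cr_less cf_suc cf_orq cf_var cf_const) auto
    then show ?thesis by (rule cf_cong) (auto simp: 0 arg0_def)
  next
    case (Suc k')
    have "cf P (Suc (Suc k)) (\<lambda>L. if orq P (L ! 0) (L ! 2) < 2 then Suc (orq P (L ! 0) (L ! 2)) else 0)"
      by (intro cf_if cr_less cf_suc cf_orq cf_var cf_const) (auto simp: Suc)
    then show ?thesis by (rule cf_cong) (auto simp: Suc arg0_def hd_drop_conv_nth)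
  qed
next
  case (Cn f gs)
  define m where "m = length gs"
  have s1: "cr P (m + 2) (\<lambda>M. \<forall>i<m. M ! (i + 2) \<noteq> 0)" by (rule cr_all_nz) simp
  have s2: "cf P (m + 2) (\<lambda>M. cev f (orq P (M ! 0)) (M ! 1) (map (\<lambda>z. z - 1) (drop 2 M)))"
  proof -
    let ?Fs = "[\<lambda>M. M ! 0, \<lambda>M. M ! 1] @ map (\<lambda>i M. M ! (i + 2) - 1) [0..<m]"
    have "cf P (length ?Fs) (\<lambda>L. cev f (orq P (L ! 0)) (L ! 1) (drop 2 L))"
      using Cn.IH(1)[of m] by (simp add: numeral_2_eq_2)
    moreover have "\<forall>F\<in>set ?Fs. cf P (m + 2) F" by (auto intro!: cf_var cf_monus cf_const)
    ultimately have "cf P (m + 2) (\<lambda>M. (\<lambda>L. cev f (orq P (L ! 0)) (L ! 1) (drop 2 L)) (map (\<lambda>F. F M) ?Fs))"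
      by (rule cf_comp)
    then show ?thesis
      by (rule cf_cong) (simp add: drop_map[of _ 2 m] comp_def)
  qed
  define G where "G M = (if \<forall>i<m. M ! (i + 2) \<noteq> 0 then
      cev f (orq P (M ! 0)) (M ! 1) (map (\<lambda>z. z - 1) (drop 2 M)) else 0)" for M
  have s3: "cf P (m + 2) G" unfolding G_def by (intro cf_if s1 s2 cf_const)
  let ?Fs = "[\<lambda>L. L ! 0, \<lambda>L. L ! 1] @ map (\<lambda>g L. cev g (orq P (L ! 0)) (L ! 1) (drop 2 L)) gs"
  have "\<forall>F\<in>set ?Fs. cf P (Suc (Suc k)) F" using Cn.IH(2) by (auto intro!: cf_var)
  moreover have "cf P (length ?Fs) G" using s3 by (simp add: m_def)
  ultimately have "cf P (Suc (Suc k)) (\<lambda>L. G (map (\<lambda>F. F L) ?Fs))" using cf_comp by blast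
  then show ?case
  proof (rule cf_cong)
    fix L :: "nat list"
    define zs where "zs = map (\<lambda>g. cev g (orq P (L ! 0)) (L ! 1) (drop 2 L)) gs"
    have lz: "length zs = m" by (simp add: zs_def m_def)
    have e: "map (\<lambda>F. F L) ?Fs = L ! 0 # L ! 1 # zs" by (simp add: zs_def comp_def)
    have iff: "(\<forall>i<m. (L ! 0 # L ! 1 # zs) ! (i + 2) \<noteq> 0) \<longleftrightarrow> 0 \<notin> set zs"
      using lz by (auto simp: in_set_conv_nth numeral_2_eq_2)
    have c: "cev (Cn f gs) (orq P (L ! 0)) (L ! 1) (drop 2 L) =
      (if 0 \<in> set zs then 0 else cev f (orq P (L ! 0)) (L ! 1) (map (\<lambda>z. z - 1) zs))"
      unfolding zs_def by (simp only: cev.simps Let_def)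
    have d: "drop 2 (L ! 0 # L ! 1 # zs) = zs" by (simp add: numeral_2_eq_2)
    show "G (map (\<lambda>F. F L) ?Fs) = cev (Cn f gs) (orq P (L ! 0)) (L ! 1) (drop 2 L)"
      unfolding e G_def c d using iff by simp
  qed
next
  case (Pr f g)
  show ?case
  proof (cases k)
    case 0
    have "cf P (Suc (Suc k)) (\<lambda>L. 0)" by (rule cf_const)
    then show ?thesis by (rule cf_cong) (auto simp: 0)
  next
    case (Suc k')
    have IHf: "cf P (k' + 2) (\<lambda>L. cev f (orq P (L ! 0)) (L ! 1) (drop 2 L))" using Pr.IH(1)[of k'] by simp
    define Gs where "Gs M = (if M ! 1 = 0 then 0 else cev g (orq P (M ! 2)) (M ! 3) (M ! 0 # (M ! 1 - 1) # drop 4 M))" for M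
    have g1: "cf P (k' + 4) (\<lambda>M. cev g (orq P (M ! 2)) (M ! 3) (M ! 0 # (M ! 1 - 1) # drop 4 M))"
    proof -
      let ?Fs = "[\<lambda>M. M ! 2, \<lambda>M. M ! 3, \<lambda>M. M ! 0, \<lambda>M. M ! 1 - 1] @ map (\<lambda>i M. M ! (i + 4)) [0..<k']"
      have "cf P (length ?Fs) (\<lambda>L. cev g (orq P (L ! 0)) (L ! 1) (drop 2 L))"
        using Pr.IH(2)[of "Suc (Suc k')"] by (simp add: numeral_2_eq_2)
      moreover have "\<forall>F\<in>set ?Fs. cf P (k' + 4) F" by (auto intro!: cf_var cf_monus cf_const)
      ultimately have "cf P (k' + 4) (\<lambda>M. (\<lambda>L. cev g (orq P (L ! 0)) (L ! 1) (drop 2 L)) (map (\<lambda>F. F M) ?Fs))"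
        by (rule cf_comp)
      then show ?thesis
        by (rule cf_cong) (simp add: drop_map[of _ 4 k'] comp_def)
    qed
    have g2: "cf P (Suc (Suc (k' + 2))) Gs" unfolding Gs_def
      using g1 by (intro cf_if cr_eq cf_var cf_const) (auto simp: numeral_eq_Suc)
    have r: "cf P (Suc (k' + 2)) (\<lambda>N. rec_nat ((\<lambda>L. cev f (orq P (L ! 0)) (L ! 1) (drop 2 L)) (tl N))
        (\<lambda>m u. Gs (m # u # tl N)) (hd N))"
      by (rule cf_rec[OF IHf g2])
    let ?Fs = "[\<lambda>L. L ! 2, \<lambda>L. L ! 0, \<lambda>L. L ! 1] @ map (\<lambda>i L. L ! (i + 3)) [0..<k']"
    have "cf P (length ?Fs) (\<lambda>N. rec_nat ((\<lambda>L. cev f (orq P (L ! 0)) (L ! 1) (drop 2 L)) (tl N))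
        (\<lambda>m u. Gs (m # u # tl N)) (hd N))" using r by (simp add: numeral_eq_Suc)
    moreover have "\<forall>F\<in>set ?Fs. cf P (Suc (Suc k)) F" by (auto intro!: cf_var simp: Suc)
    ultimately have "cf P (Suc (Suc k)) (\<lambda>L. (\<lambda>N. rec_nat ((\<lambda>L. cev f (orq P (L ! 0)) (L ! 1) (drop 2 L)) (tl N))
        (\<lambda>m u. Gs (m # u # tl N)) (hd N)) (map (\<lambda>F. F L) ?Fs))" by (rule cf_comp)
    then show ?thesis
    proof (rule cf_cong)
      fix L :: "nat list" assume len: "length L = Suc (Suc k)"
      have d3: "drop 3 L = map (\<lambda>i. L ! (i + 3)) [0..<k']" using len Suc by (intro drop_map) simp
      have l2: "2 < length L" using len Suc by simp
      have d2': "drop 2 L = L ! 2 # drop (Suc 2) L" using Cons_nth_drop_Suc[OF l2] by simp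
      have d2: "drop 2 L = L ! 2 # drop 3 L" using d2' by (simp add: numeral_3_eq_3)
      have e: "map (\<lambda>F. F L) ?Fs = L ! 2 # L ! 0 # L ! 1 # drop 3 L" by (simp add: d3 comp_def)
      show "(\<lambda>N. rec_nat ((\<lambda>L. cev f (orq P (L ! 0)) (L ! 1) (drop 2 L)) (tl N))
        (\<lambda>m u. Gs (m # u # tl N)) (hd N)) (map (\<lambda>F. F L) ?Fs) = cev (Pr f g) (orq P (L ! 0)) (L ! 1) (drop 2 L)"
        unfolding e d2 by (simp add: prec_rec Gs_def cong: if_cong)
    qed
  qed
next
  case (Mn f)
  have IHf: "cf P (Suc (Suc (Suc k))) (\<lambda>L. cev f (orq P (L ! 0)) (L ! 1) (drop 2 L))" using Mn.IH[of "Suc k"] by simp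
  have z: "cf P (k + 4) (\<lambda>M. cev f (orq P (M ! 2)) (M ! 3) (M ! 0 # drop 4 M))"
  proof -
    let ?Fs = "[\<lambda>M. M ! 2, \<lambda>M. M ! 3, \<lambda>M. M ! 0] @ map (\<lambda>i M. M ! (i + 4)) [0..<k]"
    have "cf P (length ?Fs) (\<lambda>L. cev f (orq P (L ! 0)) (L ! 1) (drop 2 L))"
      using IHf by simp
    moreover have "\<forall>F\<in>set ?Fs. cf P (k + 4) F" by (auto intro!: cf_var)
    ultimately have "cf P (k + 4) (\<lambda>M. (\<lambda>L. cev f (orq P (L ! 0)) (L ! 1) (drop 2 L)) (map (\<lambda>F. F M) ?Fs))"
      by (rule cf_comp)
    then show ?thesis
      by (rule cf_cong) (simp add: drop_map[of _ 4 k] comp_def)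
  qed
  define Ms where "Ms M = (if M ! 1 \<noteq> 0 then M ! 1 else
     (if cev f (orq P (M ! 2)) (M ! 3) (M ! 0 # drop 4 M) = 0 then 1
      else if cev f (orq P (M ! 2)) (M ! 3) (M ! 0 # drop 4 M) = 1 then M ! 0 + 2 else 0))" for M
  have m2: "cf P (Suc (Suc (k + 2))) Ms" unfolding Ms_def
    using z by (intro cf_if cr_ne cr_eq cf_var cf_const cf_add) (auto simp: numeral_eq_Suc)
  have r: "cf P (Suc (k + 2)) (\<lambda>N. rec_nat ((\<lambda>L. 0) (tl N)) (\<lambda>m u. Ms (m # u # tl N)) (hd N))"
    by (rule cf_rec[OF cf_const m2])
  let ?Fs = "[\<lambda>L. L ! 1, \<lambda>L. L ! 0, \<lambda>L. L ! 1] @ map (\<lambda>i L. L ! (i + 2)) [0..<k]"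
  have "cf P (length ?Fs) (\<lambda>N. rec_nat ((\<lambda>L. 0) (tl N)) (\<lambda>m u. Ms (m # u # tl N)) (hd N))"
    using r by (simp add: numeral_eq_Suc)
  moreover have "\<forall>F\<in>set ?Fs. cf P (Suc (Suc k)) F" by (auto intro!: cf_var)
  ultimately have "cf P (Suc (Suc k)) (\<lambda>L. (\<lambda>N. rec_nat ((\<lambda>L. 0) (tl N)) (\<lambda>m u. Ms (m # u # tl N)) (hd N)) (map (\<lambda>F. F L) ?Fs))"
    by (rule cf_comp)
  then have "cf P (Suc (Suc k)) (\<lambda>L. (\<lambda>N. rec_nat ((\<lambda>L. 0) (tl N)) (\<lambda>m u. Ms (m # u # tl N)) (hd N)) (map (\<lambda>F. F L) ?Fs) - 1)"
    by (intro cf_monus cf_const)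
  then show ?case
  proof (rule cf_cong)
    fix L :: "nat list" assume len: "length L = Suc (Suc k)"
    have d2: "drop 2 L = map (\<lambda>i. L ! (i + 2)) [0..<k]" using len by (intro drop_map) simp
    have e: "map (\<lambda>F. F L) ?Fs = L ! 1 # L ! 0 # L ! 1 # drop 2 L" by (simp add: d2 comp_def)
    show "(\<lambda>N. rec_nat ((\<lambda>L. 0) (tl N)) (\<lambda>m u. Ms (m # u # tl N)) (hd N)) (map (\<lambda>F. F L) ?Fs) - 1
       = cev (Mn f) (orq P (L ! 0)) (L ! 1) (drop 2 L)"
      unfolding e by (simp add: mst_rec Ms_def cong: if_cong)
  qed
qed




definition cdec :: "nat \<Rightarrow> cond" where
  "cdec c = (map list_decode (list_decode (pfst c)), map prod_decode (list_decode (psnd c)))"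

lemma pfst_psnd_inv: "prod_encode (pfst c, psnd c) = c"
  by (simp add: pfst_def psnd_def)

lemma ccode_cdec[simp]: "ccode (cdec c) = c"
proof -
  have "map list_encode (map list_decode (list_decode (pfst c))) = list_decode (pfst c)"
    by (induction "list_decode (pfst c)") (simp_all add: map_idI)
  moreover have "map prod_encode (map prod_decode (list_decode (psnd c))) = list_decode (psnd c)"
    by (simp add: map_idI)
  ultimately show ?thesis
    by (simp add: ccode_def cdec_def pfst_psnd_inv)
qed

lemma cdec_ccode[simp]: "cdec (ccode q) = q"
proof -
  have "map list_decode (map list_encode (fst q)) = fst q" by (simp add: map_idI)
  moreover have "map prod_decode (map prod_encode (snd q)) = snd q" by (simp add: map_idI)
  ultimately show ?thesis by (simp add: ccode_def cdec_def)
qed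

lemma pfst_enc'[simp]: "pfst (prod_encode p) = fst p" by (simp add: pfst_def)
lemma psnd_enc'[simp]: "psnd (prod_encode p) = snd p" by (simp add: psnd_def)

lemma pfst_ccode: "pfst (ccode q) = list_encode (map list_encode (fst q))"
  by (simp add: ccode_def)
lemma psnd_ccode: "psnd (ccode q) = list_encode (map prod_encode (snd q))"
  by (simp add: ccode_def)

definition in1 :: "nat \<Rightarrow> nat \<Rightarrow> bool" where "in1 c x \<longleftrightarrow> (ctl ^^ x) (pfst c) \<noteq> 0"
definition in2 :: "nat \<Rightarrow> nat \<Rightarrow> bool" where "in2 c x \<longleftrightarrow> (ctl ^^ x) (psnd c) \<noteq> 0"
definition rowc :: "nat \<Rightarrow> nat \<Rightarrow> nat" where "rowc c y = cnth (pfst c) y"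
definition inr :: "nat \<Rightarrow> nat \<Rightarrow> nat \<Rightarrow> bool" where "inr c y x \<longleftrightarrow> (ctl ^^ x) (rowc c y) \<noteq> 0"
definition sigc :: "nat \<Rightarrow> nat \<Rightarrow> nat \<Rightarrow> nat" where "sigc c x y = cnth (rowc c y) x"
definition labn :: "nat \<Rightarrow> nat \<Rightarrow> nat" where "labn c x = cnth (psnd c) x"

lemma in1_q: "in1 (ccode q) x \<longleftrightarrow> x < length (fst q)"
  unfolding in1_def pfst_ccode ctl_iter_ne by simp
lemma in2_q: "in2 (ccode q) x \<longleftrightarrow> x < clen q"
  unfolding in2_def psnd_ccode ctl_iter_ne by (simp add: clen_def)
lemma rowc_q: "y < length (fst q) \<Longrightarrow> rowc (ccode q) y = list_encode (fst q ! y)"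
  by (simp add: rowc_def pfst_ccode cnth_enc)
lemma inr_q: "y < length (fst q) \<Longrightarrow> inr (ccode q) y x \<longleftrightarrow> x < length (fst q ! y)"
  unfolding inr_def rowc_q ctl_iter_ne by simp
lemma sigc_q: "y < length (fst q) \<Longrightarrow> x < length (fst q ! y) \<Longrightarrow> sigc (ccode q) x y = csig q x y"
  by (simp add: sigc_def rowc_q cnth_enc csig_def)
lemma labn_q: "x < clen q \<Longrightarrow> labn (ccode q) x = prod_encode (clab q x)"
  by (simp add: labn_def psnd_ccode cnth_enc clen_def clab_def)

lemma sigc_cond: "is_cond q \<Longrightarrow> x < y \<Longrightarrow> y < clen q \<Longrightarrow> sigc (ccode q) x y = csig q x y"
  by (rule sigc_q) (auto simp: is_cond_def)

definition chkc :: "nat \<Rightarrow> nat \<Rightarrow> nat \<Rightarrow> bool" where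
  "chkc c x y \<longleftrightarrow> (in1 c x \<longleftrightarrow> in2 c x) \<and>
     (in2 c y \<and> in1 c y \<longrightarrow> (inr c y x \<longleftrightarrow> x < y)) \<and>
     (x < y \<and> in2 c y \<and> in1 c y \<and> inr c y x \<longrightarrow> sigc c x y < 2 \<and>
        (psnd (labn c x) \<le> y \<longrightarrow> sigc c x y = pfst (labn c x))) \<and>
     (in2 c x \<longrightarrow> pfst (labn c x) < 2)"

lemma nat_lt_iff_eq: "(\<forall>x::nat. x < a \<longleftrightarrow> x < b) \<Longrightarrow> a = b"
  by (metis less_irrefl nat_neq_iff)

lemma chkc_iff: "is_cond q \<longleftrightarrow> (\<forall>x y. chkc (ccode q) x y)"
proof
  assume c: "is_cond q"
  show "\<forall>x y. chkc (ccode q) x y"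
  proof (intro allI)
    fix x y
    have l: "length (fst q) = clen q" "\<forall>y<clen q. length (fst q ! y) = y" using c by (auto simp: is_cond_def)
    show "chkc (ccode q) x y"
      unfolding chkc_def
      using c l by (auto simp: in1_q in2_q inr_q sigc_q labn_q is_cond_def)
  qed
next
  assume a: "\<forall>x y. chkc (ccode q) x y"
  have l1: "length (fst q) = clen q"
    by (rule nat_lt_iff_eq) (use a in \<open>auto simp: chkc_def in1_q in2_q\<close>)
  have l2: "\<forall>y<clen q. length (fst q ! y) = y"
  proof (intro allI impI)
    fix y assume "y < clen q"
    then show "length (fst q ! y) = y"
      by (intro nat_lt_iff_eq) (use a l1 in \<open>auto simp: chkc_def in1_q in2_q inr_q\<close>)
  qed
  have s: "\<forall>x y. x < y \<and> y < clen q \<longrightarrow> csig q x y < 2 \<and> (snd (clab q x) \<le> y \<longrightarrow> csig q x y = fst (clab q x))"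
  proof (intro allI impI)
    fix x y assume xy: "x < y \<and> y < clen q"
    then have "chkc (ccode q) x y" using a by blast
    then show "csig q x y < 2 \<and> (snd (clab q x) \<le> y \<longrightarrow> csig q x y = fst (clab q x))"
      using xy l1 l2 by (auto simp: chkc_def in1_q in2_q inr_q sigc_q labn_q)
  qed
  have lb: "\<forall>x<clen q. fst (clab q x) < 2"
  proof (intro allI impI)
    fix x assume "x < clen q"
    then show "fst (clab q x) < 2" using a[rule_format, of x 0] by (auto simp: chkc_def in2_q labn_q)
  qed
  show "is_cond q" unfolding is_cond_def using l1 l2 s lb by blast
qed

definition chkle :: "nat \<Rightarrow> nat \<Rightarrow> nat \<Rightarrow> nat \<Rightarrow> bool" where
  "chkle r c x y \<longleftrightarrow> (in2 c x \<longrightarrow> in2 r x) \<and> (x < y \<and> in2 c y \<longrightarrow> sigc r x y = sigc c x y) \<and>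
     (in2 c x \<longrightarrow> labn r x = labn c x)"

lemma chkle_iff:
  assumes "is_cond r" "is_cond q"
  shows "cle r q \<longleftrightarrow> (\<forall>x y. chkle (ccode r) (ccode q) x y)"
proof
  assume "cle r q"
  then show "\<forall>x y. chkle (ccode r) (ccode q) x y"
    using assms by (auto simp: chkle_def cle_def in2_q sigc_cond labn_q)
next
  assume a: "\<forall>x y. chkle (ccode r) (ccode q) x y"
  have l: "clen q \<le> clen r"
    using a[rule_format, of "clen q - 1" 0] by (cases "clen q") (auto simp: chkle_def in2_q)
  have "\<forall>x y. x < y \<and> y < clen q \<longrightarrow> csig r x y = csig q x y"
    using a l assms by (auto simp: chkle_def in2_q sigc_cond)
  moreover have "\<forall>x<clen q. clab r x = clab q x"
    using a l assms by (auto simp: chkle_def in2_q labn_q)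
  ultimately show "cle r q" using l by (simp add: cle_def)
qed




lemma cr_in1: "cf A k C \<Longrightarrow> cf A k X \<Longrightarrow> cr A k (\<lambda>xs. in1 (C xs) (X xs))"
  unfolding in1_def by (intro cr_ne cf_ctl_iter cf1_app[OF cf1_pfst] cf_const)
lemma cr_in2: "cf A k C \<Longrightarrow> cf A k X \<Longrightarrow> cr A k (\<lambda>xs. in2 (C xs) (X xs))"
  unfolding in2_def by (intro cr_ne cf_ctl_iter cf1_app[OF cf1_psnd] cf_const)
lemma cf_rowc: "cf A k C \<Longrightarrow> cf A k Y \<Longrightarrow> cf A k (\<lambda>xs. rowc (C xs) (Y xs))"
  unfolding rowc_def by (intro cf_cnth cf1_app[OF cf1_pfst])
lemma cr_inr: "cf A k C \<Longrightarrow> cf A k Y \<Longrightarrow> cf A k X \<Longrightarrow> cr A k (\<lambda>xs. inr (C xs) (Y xs) (X xs))"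
  unfolding inr_def by (intro cr_ne cf_ctl_iter cf_rowc cf_const)
lemma cf_sigc: "cf A k C \<Longrightarrow> cf A k X \<Longrightarrow> cf A k Y \<Longrightarrow> cf A k (\<lambda>xs. sigc (C xs) (X xs) (Y xs))"
  unfolding sigc_def by (intro cf_cnth cf_rowc)
lemma cf_labn: "cf A k C \<Longrightarrow> cf A k X \<Longrightarrow> cf A k (\<lambda>xs. labn (C xs) (X xs))"
  unfolding labn_def by (intro cf_cnth cf1_app[OF cf1_psnd])

lemma cr_chkc: "cf A k C \<Longrightarrow> cf A k X \<Longrightarrow> cf A k Y \<Longrightarrow> cr A k (\<lambda>xs. chkc (C xs) (X xs) (Y xs))"
  unfolding chkc_def
  by (intro cr_and cr_iff cr_imp cr_in1 cr_in2 cr_inr cr_less cr_le cr_eq cf_sigc cf_const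
       cf1_app[OF cf1_pfst] cf1_app[OF cf1_psnd] cf_labn; assumption?)

lemma cr_chkle: "cf A k R \<Longrightarrow> cf A k C \<Longrightarrow> cf A k X \<Longrightarrow> cf A k Y \<Longrightarrow> cr A k (\<lambda>xs. chkle (R xs) (C xs) (X xs) (Y xs))"
  unfolding chkle_def
  by (intro cr_and cr_imp cr_in2 cr_less cr_eq cf_sigc cf_labn; assumption?)

lemma cf_cev: "cf P k C \<Longrightarrow> cf P k T \<Longrightarrow> cf P k N \<Longrightarrow> cf P k (\<lambda>xs. cev e (orq P (C xs)) (T xs) [N xs])"
proof -
  assume a: "cf P k C" "cf P k T" "cf P k N"
  have "cf P 3 (\<lambda>L. cev e (orq P (L ! 0)) (L ! 1) (drop 2 L))"
    using cev_cf[of P 1 e] by (simp add: numeral_3_eq_3)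
  from cf_comp3[OF this a] show ?thesis by (simp add: numeral_2_eq_2)
qed

definition forces :: "nat set \<Rightarrow> rf \<Rightarrow> cond \<Rightarrow> nat \<Rightarrow> bool" where
  "forces P e q n \<longleftrightarrow> ev2 (orq P (ccode q)) e [n] 1"

definition Aq :: "nat set \<Rightarrow> rf \<Rightarrow> nat \<Rightarrow> cond \<Rightarrow> bool" where
  "Aq P e col q \<longleftrightarrow> (\<exists>x y. x < clen q \<and> y < clen q \<and> x \<noteq> y \<and> fpair (csig q) x y \<noteq> col \<and>
      forces P e q (2 * x) \<and> forces P e q (2 * y + 1))"

definition Bq :: "nat set \<Rightarrow> rf \<Rightarrow> nat \<Rightarrow> cond \<Rightarrow> bool" where
  "Bq P e j q \<longleftrightarrow> (\<exists>a0. \<forall>r x. is_cond r \<and> cle r q \<and> a0 \<le> x \<longrightarrow> \<not> forces P e r (2 * x + j))"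

definition Wset :: "nat set \<Rightarrow> rf \<Rightarrow> nat \<Rightarrow> cond set" where
  "Wset P e col = {q. is_cond q \<and> (Aq P e col q \<or> Bq P e 0 q \<or> Bq P e 1 q)}"

definition fpc :: "nat \<Rightarrow> nat \<Rightarrow> nat \<Rightarrow> nat" where
  "fpc c x y = (if x < y then sigc c x y else sigc c y x)"

definition Abody :: "nat set \<Rightarrow> rf \<Rightarrow> nat \<Rightarrow> nat \<Rightarrow> nat \<Rightarrow> bool" where
  "Abody P e col c w \<longleftrightarrow> in2 c (pfst w) \<and> in2 c (pfst (psnd w)) \<and> pfst w \<noteq> pfst (psnd w) \<and>
     fpc c (pfst w) (pfst (psnd w)) \<noteq> col \<and>
     cev e (orq P c) (psnd (psnd w)) [2 * pfst w] = 2 \<and>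
     cev e (orq P c) (psnd (psnd w)) [2 * pfst (psnd w) + 1] = 2"

definition Bbody :: "nat set \<Rightarrow> rf \<Rightarrow> nat \<Rightarrow> nat \<Rightarrow> nat \<Rightarrow> nat \<Rightarrow> nat \<Rightarrow> bool" where
  "Bbody P e j c a0 b2 d \<longleftrightarrow> \<not> chkc (pfst b2) (pfst d) (psnd d) \<or> \<not> chkle (pfst b2) c (pfst d) (psnd d) \<or>
     pfst (psnd b2) < a0 \<or> cev e (orq P (pfst b2)) (psnd (psnd b2)) [2 * pfst (psnd b2) + j] \<noteq> 2"

definition Rel :: "nat set \<Rightarrow> rf \<Rightarrow> nat \<Rightarrow> nat list \<Rightarrow> bool" where
  "Rel P e col xs \<longleftrightarrow> chkc (xs ! 0) (pfst (pfst (xs ! 2))) (psnd (pfst (xs ! 2))) \<and>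
     ((pfst (xs ! 1) = 0 \<and> Abody P e col (xs ! 0) (psnd (xs ! 1))) \<or>
      (pfst (xs ! 1) = 1 \<and> Bbody P e 0 (xs ! 0) (psnd (xs ! 1)) (psnd (xs ! 2)) (xs ! 3)) \<or>
      (pfst (xs ! 1) = 2 \<and> Bbody P e 1 (xs ! 0) (psnd (xs ! 1)) (psnd (xs ! 2)) (xs ! 3)))"

lemma cr_Abody: "cf P k C \<Longrightarrow> cf P k W \<Longrightarrow> cr P k (\<lambda>xs. Abody P e col (C xs) (W xs))"
  unfolding Abody_def fpc_def
  by (intro cr_and cr_in2 cr_ne cr_eq cf_if cr_less cf_sigc cf_cev cf_mult cf_add cf_const
       cf1_app[OF cf1_pfst] cf1_app[OF cf1_psnd]; assumption?)

lemma cr_Bbody: "cf P k C \<Longrightarrow> cf P k A0 \<Longrightarrow> cf P k B \<Longrightarrow> cf P k D \<Longrightarrow>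
   cr P k (\<lambda>xs. Bbody P e j (C xs) (A0 xs) (B xs) (D xs))"
  unfolding Bbody_def
  by (intro cr_or cr_not cr_chkc cr_chkle cr_less cr_ne cf_cev cf_mult cf_add cf_const
       cf1_app[OF cf1_pfst] cf1_app[OF cf1_psnd]; assumption?)

lemma cr_Rel: "cr P 4 (Rel P e col)"
  unfolding Rel_def
  by (intro cr_and cr_or cr_eq cr_chkc cr_Abody cr_Bbody cf_const cf_var
       cf1_app[OF cf1_pfst] cf1_app[OF cf1_psnd]) simp_all

lemma forces_iff: "forces P e q n \<longleftrightarrow> (\<exists>t. cev e (orq P (ccode q)) t [n] = 2)"
proof
  assume "forces P e q n"
  then obtain T where "\<forall>t\<ge>T. cev e (orq P (ccode q)) t [n] = Suc 1"
    unfolding forces_def using cev_complete by blast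
  then show "\<exists>t. cev e (orq P (ccode q)) t [n] = 2" by (auto simp: numeral_2_eq_2)
next
  assume "\<exists>t. cev e (orq P (ccode q)) t [n] = 2"
  then obtain t where "cev e (orq P (ccode q)) t [n] = Suc 1" by (auto simp: numeral_2_eq_2)
  then show "forces P e q n" unfolding forces_def by (rule cev_sound)
qed

lemma forces_T: "forces P e q n \<Longrightarrow> \<exists>T. \<forall>t\<ge>T. cev e (orq P (ccode q)) t [n] = 2"
  unfolding forces_def using cev_complete[of "orq P (ccode q)" e "[n]" 1] by (simp add: numeral_2_eq_2)

lemma fpc_q: "is_cond q \<Longrightarrow> x < clen q \<Longrightarrow> y < clen q \<Longrightarrow> x \<noteq> y \<Longrightarrow> fpc (ccode q) x y = fpair (csig q) x y"
  by (auto simp: fpc_def fpair_def sigc_cond)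

lemma A_iff:
  assumes c: "is_cond q"
  shows "Aq P e col q \<longleftrightarrow> (\<exists>w. Abody P e col (ccode q) w)"
proof
  assume "Aq P e col q"
  then obtain x y where xy: "x < clen q" "y < clen q" "x \<noteq> y" "fpair (csig q) x y \<noteq> col"
    "forces P e q (2 * x)" "forces P e q (2 * y + 1)" unfolding Aq_def by blast
  obtain T1 where T1: "\<forall>t\<ge>T1. cev e (orq P (ccode q)) t [2 * x] = 2" using forces_T xy(5) by blast
  obtain T2 where T2: "\<forall>t\<ge>T2. cev e (orq P (ccode q)) t [2 * y + 1] = 2" using forces_T xy(6) by blast
  have "Abody P e col (ccode q) (prod_encode (x, prod_encode (y, max T1 T2)))"
    unfolding Abody_def using xy T1 T2 c by (simp add: in2_q fpc_q)
  then show "\<exists>w. Abody P e col (ccode q) w" by blast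
next
  assume "\<exists>w. Abody P e col (ccode q) w"
  then obtain w where w: "Abody P e col (ccode q) w" by blast
  define x where "x = pfst w"
  define y where "y = pfst (psnd w)"
  define t where "t = psnd (psnd w)"
  have h: "x < clen q" "y < clen q" "x \<noteq> y" "fpc (ccode q) x y \<noteq> col"
     "cev e (orq P (ccode q)) t [2 * x] = 2" "cev e (orq P (ccode q)) t [2 * y + 1] = 2"
    using w unfolding Abody_def x_def y_def t_def by (auto simp: in2_q)
  then have "fpair (csig q) x y \<noteq> col" using fpc_q[OF c] by simp
  then show "Aq P e col q" unfolding Aq_def using h forces_iff by blast
qed

lemma B_iff:
  assumes c: "is_cond q"
  shows "Bq P e j q \<longleftrightarrow> (\<exists>a0. \<forall>b2. \<exists>d. Bbody P e j (ccode q) a0 b2 d)"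
proof
  assume "Bq P e j q"
  then obtain a0 where a0: "\<forall>r x. is_cond r \<and> cle r q \<and> a0 \<le> x \<longrightarrow> \<not> forces P e r (2 * x + j)"
    unfolding Bq_def by blast
  have "\<forall>b2. \<exists>d. Bbody P e j (ccode q) a0 b2 d"
  proof
    fix b2
    define r where "r = cdec (pfst b2)"
    have rc: "ccode r = pfst b2" by (simp add: r_def)
    show "\<exists>d. Bbody P e j (ccode q) a0 b2 d"
    proof (cases "is_cond r")
      case False
      then obtain x' y' where "\<not> chkc (ccode r) x' y'" using chkc_iff by blast
      then have "Bbody P e j (ccode q) a0 b2 (prod_encode (x', y'))" unfolding Bbody_def rc by simp
      then show ?thesis by blast
    next
      case rcond: True
      show ?thesis
      proof (cases "cle r q")
        case False
        then obtain x' y' where "\<not> chkle (ccode r) (ccode q) x' y'" using chkle_iff[OF rcond c] by blast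
        then have "Bbody P e j (ccode q) a0 b2 (prod_encode (x', y'))" unfolding Bbody_def rc by simp
        then show ?thesis by blast
      next
        case True
        show ?thesis
        proof (cases "pfst (psnd b2) < a0")
          case True
          then have "Bbody P e j (ccode q) a0 b2 0" unfolding Bbody_def by simp
          then show ?thesis by blast
        next
          case False
          then have "\<not> forces P e r (2 * pfst (psnd b2) + j)" using a0[rule_format, of r "pfst (psnd b2)"] rcond True by simp
          then have "cev e (orq P (pfst b2)) (psnd (psnd b2)) [2 * pfst (psnd b2) + j] \<noteq> 2"
            using forces_iff[of P e r] rc by auto
          then have "Bbody P e j (ccode q) a0 b2 0" unfolding Bbody_def by simp
          then show ?thesis by blast
        qed
      qed
    qed
  qed
  then show "\<exists>a0. \<forall>b2. \<exists>d. Bbody P e j (ccode q) a0 b2 d" by blast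
next
  assume "\<exists>a0. \<forall>b2. \<exists>d. Bbody P e j (ccode q) a0 b2 d"
  then obtain a0 where a0: "\<forall>b2. \<exists>d. Bbody P e j (ccode q) a0 b2 d" by blast
  have "\<forall>r x. is_cond r \<and> cle r q \<and> a0 \<le> x \<longrightarrow> \<not> forces P e r (2 * x + j)"
  proof (intro allI impI notI)
    fix r x assume h: "is_cond r \<and> cle r q \<and> a0 \<le> x" and f: "forces P e r (2 * x + j)"
    obtain t where t: "cev e (orq P (ccode r)) t [2 * x + j] = 2" using f forces_iff by blast
    obtain d where d: "Bbody P e j (ccode q) a0 (prod_encode (ccode r, prod_encode (x, t))) d" using a0 by blast
    have "chkc (ccode r) (pfst d) (psnd d)" using h chkc_iff by blast
    moreover have "chkle (ccode r) (ccode q) (pfst d) (psnd d)" using h chkle_iff[OF _ c] by blast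
    ultimately show False using d h t unfolding Bbody_def by simp
  qed
  then show "Bq P e j q" unfolding Bq_def by blast
qed

lemma W_iff: "c \<in> ccode ` Wset P e col \<longleftrightarrow> (\<exists>a. \<forall>b. \<exists>d. Rel P e col [c, a, b, d])"
proof -
  define q where "q = cdec c"
  have cq: "c = ccode q" by (simp add: q_def)
  have "c \<in> ccode ` Wset P e col \<longleftrightarrow> q \<in> Wset P e col"
    unfolding cq by (metis cdec_ccode image_iff)
  also have "\<dots> \<longleftrightarrow> (\<exists>a. \<forall>b. \<exists>d. Rel P e col [c, a, b, d])"
  proof
    assume qW: "q \<in> Wset P e col"
    then have qc: "is_cond q" by (simp add: Wset_def)
    then have ck: "\<forall>x y. chkc c x y" using chkc_iff cq by blast
    from qW consider "Aq P e col q" | "Bq P e 0 q" | "Bq P e 1 q" by (auto simp: Wset_def)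
    then show "\<exists>a. \<forall>b. \<exists>d. Rel P e col [c, a, b, d]"
    proof cases
      case 1
      then obtain w where w: "Abody P e col c w" using A_iff[OF qc] cq by blast
      have "\<forall>b. Rel P e col [c, prod_encode (0, w), b, 0]" using ck w by (simp add: Rel_def)
      then show ?thesis by blast
    next
      case 2
      then obtain a0 where a0: "\<forall>b2. \<exists>d. Bbody P e 0 c a0 b2 d" using B_iff[OF qc] cq by blast
      have "\<forall>b. \<exists>d. Rel P e col [c, prod_encode (1, a0), b, d]"
      proof
        fix b
        obtain d where "Bbody P e 0 c a0 (psnd b) d" using a0 by blast
        then show "\<exists>d. Rel P e col [c, prod_encode (1, a0), b, d]" using ck by (auto simp: Rel_def)
      qed
      then show ?thesis by blast
    next
      case 3
      then obtain a0 where a0: "\<forall>b2. \<exists>d. Bbody P e 1 c a0 b2 d" using B_iff[OF qc] cq by blast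
      have "\<forall>b. \<exists>d. Rel P e col [c, prod_encode (2, a0), b, d]"
      proof
        fix b
        obtain d where "Bbody P e 1 c a0 (psnd b) d" using a0 by blast
        then show "\<exists>d. Rel P e col [c, prod_encode (2, a0), b, d]" using ck by (auto simp: Rel_def)
      qed
      then show ?thesis by blast
    qed
  next
    assume "\<exists>a. \<forall>b. \<exists>d. Rel P e col [c, a, b, d]"
    then obtain a where a: "\<forall>b. \<exists>d. Rel P e col [c, a, b, d]" by blast
    have ck: "\<forall>x y. chkc c x y"
    proof (intro allI)
      fix x y
      obtain d where "Rel P e col [c, a, prod_encode (prod_encode (x, y), 0), d]" using a by blast
      then show "chkc c x y" by (simp add: Rel_def)
    qed
    then have qc: "is_cond q" using chkc_iff cq by blast
    have "pfst a = 0 \<or> pfst a = 1 \<or> pfst a = 2"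
    proof -
      obtain d where "Rel P e col [c, a, 0, d]" using a by blast
      then show ?thesis by (auto simp: Rel_def)
    qed
    then consider "pfst a = 0" | "pfst a = 1" | "pfst a = 2" by metis
    then have "Aq P e col q \<or> Bq P e 0 q \<or> Bq P e 1 q"
    proof cases
      case 1
      obtain d where "Rel P e col [c, a, 0, d]" using a by blast
      then have "Abody P e col c (psnd a)" using 1 by (simp add: Rel_def)
      then show ?thesis using A_iff[OF qc] cq by blast
    next
      case 2
      have "\<forall>b2. \<exists>d. Bbody P e 0 c (psnd a) b2 d"
      proof
        fix b2
        obtain d where "Rel P e col [c, a, prod_encode (0, b2), d]" using a by blast
        then show "\<exists>d. Bbody P e 0 c (psnd a) b2 d" using 2 by (auto simp: Rel_def)
      qed
      then show ?thesis using B_iff[OF qc] cq by blast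
    next
      case 3
      have "\<forall>b2. \<exists>d. Bbody P e 1 c (psnd a) b2 d"
      proof
        fix b2
        obtain d where "Rel P e col [c, a, prod_encode (0, b2), d]" using a by blast
        then show "\<exists>d. Bbody P e 1 c (psnd a) b2 d" using 3 by (auto simp: Rel_def)
      qed
      then show ?thesis using B_iff[OF qc] cq by blast
    qed
    then show "q \<in> Wset P e col" using qc by (simp add: Wset_def)
  qed
  finally show ?thesis .
qed

lemma W_sigma3: "sigma3 P (ccode ` Wset P e col)"
proof -
  have "rec_rel P 4 (Rel P e col)"
    using cr_Rel[of P e col] unfolding cr_def cf_def progc_def rec_rel_def by blast
  then show ?thesis unfolding sigma3_def using W_iff by blast
qed




definition sig_ext :: "cond \<Rightarrow> cond \<Rightarrow> bool" where
  "sig_ext q r \<longleftrightarrow> clen q \<le> clen r \<and> (\<forall>x y. x < y \<and> y < clen q \<longrightarrow> csig r x y = csig q x y)"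

lemma cle_sig_ext: "cle r q \<Longrightarrow> sig_ext q r"
  by (simp add: cle_def sig_ext_def)

lemma sig_ext_trans: "sig_ext p q \<Longrightarrow> sig_ext q r \<Longrightarrow> sig_ext p r"
  unfolding sig_ext_def by (metis le_trans less_le_trans)

lemma cle_refl: "cle p p" by (simp add: cle_def)

lemma cle_trans: "cle r q \<Longrightarrow> cle q p \<Longrightarrow> cle r p"
  unfolding cle_def by (metis le_trans less_le_trans)

lemma join_chi: "chi (join B P) a = (if a mod 2 = 0 then chi B (a div 2) else chi P (a div 2))"
proof -
  have "a \<in> join B P \<longleftrightarrow> (if a mod 2 = 0 then a div 2 \<in> B else a div 2 \<in> P)"
  proof (cases "a mod 2 = 0")
    case True
    then have a: "a = 2 * (a div 2)" by presburger
    have n: "\<forall>y. a \<noteq> 2 * y + 1" using True by presburger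
    have "a \<in> join B P \<longleftrightarrow> a div 2 \<in> B"
    proof
      assume "a \<in> join B P"
      then obtain x where "a = 2 * x" "x \<in> B" using n unfolding join_def by blast
      then show "a div 2 \<in> B" by simp
    next
      assume "a div 2 \<in> B"
      then show "a \<in> join B P" unfolding join_def using a by blast
    qed
    then show ?thesis using True by simp
  next
    case False
    then have a: "a = 2 * (a div 2) + 1" by presburger
    have n: "\<forall>y. a \<noteq> 2 * y" using False by presburger
    have "a \<in> join B P \<longleftrightarrow> a div 2 \<in> P"
    proof
      assume "a \<in> join B P"
      then obtain x where "a = 2 * x + 1" "x \<in> P" using n unfolding join_def by blast
      then show "a div 2 \<in> P" by simp
    next
      assume "a div 2 \<in> P"
      then show "a \<in> join B P" unfolding join_def using a by blast
    qed
    then show ?thesis using False by simp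
  qed
  then show ?thesis by (simp add: chi_def)
qed

lemma colset_mem: "b \<in> colset f \<longleftrightarrow> pfst b < psnd b \<and> f (pfst b) (psnd b) = 1"
proof -
  have "b = prod_encode (pfst b, psnd b)" by (simp add: pfst_psnd_inv)
  show ?thesis
  proof
    assume "b \<in> colset f"
    then obtain x y where "b = prod_encode (x, y)" "x < y" "f x y = 1" unfolding colset_def by blast
    then show "pfst b < psnd b \<and> f (pfst b) (psnd b) = 1" by simp
  next
    assume h: "pfst b < psnd b \<and> f (pfst b) (psnd b) = 1"
    show "b \<in> colset f" unfolding colset_def using h \<open>b = prod_encode (pfst b, psnd b)\<close> by blast
  qed
qed

lemma orq_cond:
  assumes "is_cond q"
  shows "orq P (ccode q) a = (if a mod 2 = 0 then
      (if pfst (a div 2) < psnd (a div 2) then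
        (if psnd (a div 2) < clen q then (if csig q (pfst (a div 2)) (psnd (a div 2)) = 1 then 1 else 0) else 2)
       else 0)
     else chi P (a div 2))"
proof -
  have "sigc (ccode q) (pfst (a div 2)) (psnd (a div 2)) = csig q (pfst (a div 2)) (psnd (a div 2))"
    if "pfst (a div 2) < psnd (a div 2)" "psnd (a div 2) < clen q"
    using sigc_cond[OF assms that] .
  then show ?thesis
    unfolding orq_def colq_def using in2_q[of q] by (auto simp: in2_def sigc_def rowc_def)
qed

lemma psnd_le: "psnd b \<le> b"
  by (metis le_prod_encode_2 pfst_psnd_inv)

lemma orq_mono:
  assumes "is_cond q" "is_cond r" "sig_ext q r"
  shows "\<forall>a. orq P (ccode q) a < 2 \<longrightarrow> orq P (ccode r) a = orq P (ccode q) a"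
  using assms unfolding sig_ext_def
  by (auto simp: orq_cond[OF assms(1)] orq_cond[OF assms(2)])

lemma forces_mono:
  "is_cond q \<Longrightarrow> is_cond r \<Longrightarrow> sig_ext q r \<Longrightarrow> forces P e q n \<Longrightarrow> forces P e r n"
  unfolding forces_def using ev2_mono orq_mono by blast

definition ext :: "cond \<Rightarrow> nat \<Rightarrow> nat \<Rightarrow> nat \<Rightarrow> cond" where
  "ext r m x0 d = (map (\<lambda>y. if y < clen r then fst r ! y else
        map (\<lambda>x'. if x' < clen r then fst (clab r x') else 0) [0..<y]) [0..<m],
     map (\<lambda>x'. if x' = x0 then (d, m) else if x' < clen r then clab r x' else (0, m)) [0..<m])"

lemma ext_clen[simp]: "clen (ext r m x0 d) = m"
  by (simp add: ext_def clen_def)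

lemma ext_csig: "x < y \<Longrightarrow> y < m \<Longrightarrow> csig (ext r m x0 d) x y =
   (if y < clen r then csig r x y else if x < clen r then fst (clab r x) else 0)"
  by (simp add: ext_def csig_def)

lemma ext_clab: "x < m \<Longrightarrow> clab (ext r m x0 d) x =
   (if x = x0 then (d, m) else if x < clen r then clab r x else (0, m))"
  by (simp add: ext_def clab_def)

lemma ext_cond:
  assumes r: "is_cond r" and m: "clen r \<le> m" and d: "d < 2"
  shows "is_cond (ext r m x0 d)"
proof -
  have l: "length (fst r) = clen r" "\<forall>y<clen r. length (fst r ! y) = y" using r by (auto simp: is_cond_def)
  have a: "length (fst (ext r m x0 d)) = clen (ext r m x0 d)" by (simp add: ext_def clen_def)
  have b: "\<forall>y<clen (ext r m x0 d). length (fst (ext r m x0 d) ! y) = y" using l by (simp add: ext_def clen_def)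
  have c: "\<forall>x y. x < y \<and> y < clen (ext r m x0 d) \<longrightarrow> csig (ext r m x0 d) x y < 2"
    using r by (auto simp: ext_csig is_cond_def)
  have e: "\<forall>x<clen (ext r m x0 d). fst (clab (ext r m x0 d) x) < 2"
    using r d by (auto simp: ext_clab is_cond_def)
  have f: "\<forall>x y. x < y \<and> y < clen (ext r m x0 d) \<and> snd (clab (ext r m x0 d) x) \<le> y \<longrightarrow>
      csig (ext r m x0 d) x y = fst (clab (ext r m x0 d) x)"
    using r by (auto simp: ext_csig ext_clab is_cond_def)
  show ?thesis unfolding is_cond_def using a b c e f by blast
qed

lemma ext_sig_ext: "clen r \<le> m \<Longrightarrow> sig_ext r (ext r m x0 d)"
  by (simp add: sig_ext_def ext_csig)

lemma ext_cle: "cle r p \<Longrightarrow> clen r \<le> m \<Longrightarrow> clen p \<le> x0 \<Longrightarrow> cle (ext r m x0 d) p"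
  unfolding cle_def by (auto simp: ext_csig ext_clab)

lemma seq_cle:
  assumes "\<And>s. cle (ps (Suc s)) (ps s)"
  shows "s \<le> s' \<Longrightarrow> cle (ps s') (ps s)"
proof (induction s' rule: dec_induct)
  case base then show ?case by (rule cle_refl)
next
  case (step n) then show ?case using assms cle_trans by blast
qed

theorem lemma4p2:
  fixes P :: "nat set" and ps :: "nat \<Rightarrow> cond" and f :: "nat \<Rightarrow> nat \<Rightarrow> nat"
  assumes conds: "\<And>s. is_cond (ps s)"
    and desc: "\<And>s. cle (ps (Suc s)) (ps s)"
    and unbounded: "filterlim (\<lambda>s. clen (ps s)) at_top sequentially"
    and generic: "three_generic P ps"
    and f_def: "\<And>s x y. x < y \<Longrightarrow> y < clen (ps s) \<Longrightarrow> f x y = csig (ps s) x y"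
  shows "\<not> (\<exists>H. p_homog f H \<and> turing_le H (join (colset f) P))"
proof
  assume "\<exists>H. p_homog f H \<and> turing_le H (join (colset f) P)"
  then obtain H where ph: "p_homog f H" and tl: "turing_le H (join (colset f) P)" by blast
  define A where "A = join (colset f) P"
  obtain e where e: "\<And>x. ev A e [x] (if x \<in> H then 1 else 0)" using tl unfolding turing_le_def A_def by blast
  define HL where "HL = {x. 2 * x \<in> H}"
  define HR where "HR = {y. 2 * y + 1 \<in> H}"
  obtain col where HLi: "infinite HL" and HRi: "infinite HR"
    and hom: "\<And>x y. x \<in> HL \<Longrightarrow> y \<in> HR \<Longrightarrow> x \<noteq> y \<Longrightarrow> fpair f x y = col"
    using ph unfolding p_homog_def HL_def HR_def Let_def by blast

  have orq_ok: "\<forall>a. orq P (ccode (ps s)) a < 2 \<longrightarrow> orq P (ccode (ps s)) a = chi A a" for s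
  proof (intro allI impI)
    fix a assume lt: "orq P (ccode (ps s)) a < 2"
    show "orq P (ccode (ps s)) a = chi A a"
    proof (cases "a mod 2 = 0")
      case True
      define x where "x = pfst (a div 2)"
      define y where "y = psnd (a div 2)"
      have "chi A a = chi (colset f) (a div 2)" using True by (simp add: A_def join_chi)
      also have "\<dots> = (if x < y \<and> f x y = 1 then 1 else 0)" by (simp add: chi_def colset_mem x_def y_def)
      finally have ca: "chi A a = (if x < y \<and> f x y = 1 then 1 else 0)" .
      show ?thesis
      proof (cases "x < y")
        case True
        then have "y < clen (ps s)" using lt \<open>a mod 2 = 0\<close> orq_cond[OF conds[of s], of P a]
          by (auto simp: x_def y_def split: if_splits)
        then show ?thesis using True \<open>a mod 2 = 0\<close> orq_cond[OF conds[of s], of P a] ca f_def[of x y s]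
          by (simp add: x_def y_def)
      next
        case False
        then show ?thesis using \<open>a mod 2 = 0\<close> orq_cond[OF conds[of s], of P a] ca by (simp add: x_def y_def)
      qed
    next
      case False
      then show ?thesis using orq_cond[OF conds[of s], of P a] by (simp add: A_def join_chi)
    qed
  qed
  have orq_lt: "orq P (ccode (ps s)) a < 2" if "a < clen (ps s)" for s a
  proof -
    have "psnd (a div 2) < clen (ps s)" using that psnd_le[of "a div 2"] by linarith
    then show ?thesis using orq_cond[OF conds[of s], of P a] by (auto simp: chi_def)
  qed
  have forces_H: "n \<in> H" if "forces P e (ps s) n" for s n
  proof -
    have "ev A e [n] 1" using ev2_ev that orq_ok unfolding forces_def by blast
    then have "1 = (if n \<in> H then 1 else (0::nat))" using ev_det e by blast
    then show ?thesis by (simp split: if_splits)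
  qed
  have H_forces: "\<exists>s\<ge>s0. forces P e (ps s) n" if "n \<in> H" for s0 n
  proof -
    have "ev A e [n] 1" using e[of n] that by simp
    then obtain N where N: "\<forall>N'\<ge>N. \<forall>ora. (\<forall>a<N'. ora a = chi A a) \<longrightarrow> ev2 ora e [n] 1"
      using ev_ev2 by blast
    obtain s1 where s1: "\<forall>s\<ge>s1. N \<le> clen (ps s)"
      using unbounded unfolding filterlim_at_top eventually_sequentially by blast
    define s where "s = max s0 s1"
    have "\<forall>a<clen (ps s). orq P (ccode (ps s)) a = chi A a" using orq_ok orq_lt by blast
    moreover have "N \<le> clen (ps s)" using s1 by (simp add: s_def)
    ultimately have "ev2 (orq P (ccode (ps s))) e [n] 1" using N[rule_format, of "clen (ps s)" "orq P (ccode (ps s))"] by blast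
    then show ?thesis unfolding forces_def s_def by (intro exI[of _ "max s0 s1"]) simp
  qed

  define d where "d = (if col = 0 then 1 else (0::nat))"
  have d2: "d < 2" and dc: "d \<noteq> col" by (auto simp: d_def)
  define W where "W = Wset P e col"
  have "W \<subseteq> Collect is_cond" by (auto simp: W_def Wset_def)
  moreover have "sigma3 P (ccode ` W)" unfolding W_def by (rule W_sigma3)
  ultimately have gen: "(\<exists>s. ps s \<in> W) \<or> (\<exists>s. \<not> (\<exists>q\<in>W. cle q (ps s)))"
    using generic unfolding three_generic_def by blast
  then show False
  proof
    assume "\<exists>s. ps s \<in> W"
    then obtain s where sW: "ps s \<in> W" by blast
    then consider "Aq P e col (ps s)" | "Bq P e 0 (ps s)" | "Bq P e 1 (ps s)" by (auto simp: W_def Wset_def)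
    then show False
    proof cases
      case 1
      then obtain x y where xy: "x < clen (ps s)" "y < clen (ps s)" "x \<noteq> y" "fpair (csig (ps s)) x y \<noteq> col"
        "forces P e (ps s) (2 * x)" "forces P e (ps s) (2 * y + 1)" unfolding Aq_def by blast
      have "x \<in> HL" "y \<in> HR" using forces_H xy(5,6) by (auto simp: HL_def HR_def)
      then have "fpair f x y = col" using hom xy(3) by blast
      moreover have "fpair f x y = fpair (csig (ps s)) x y"
        using xy(1,2,3) f_def[of x y s] f_def[of y x s] by (auto simp: fpair_def)
      ultimately show False using xy(4) by simp
    next
      case 2
      then obtain a0 where a0: "\<forall>r x. is_cond r \<and> cle r (ps s) \<and> a0 \<le> x \<longrightarrow> \<not> forces P e r (2 * x + 0)"
        unfolding Bq_def by blast
      have "\<not> HL \<subseteq> {..<a0}" using HLi finite_subset by blast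
      then obtain x where x0: "x \<in> HL" "x \<notin> {..<a0}" by blast
      then have x: "x \<in> HL" "a0 \<le> x" by auto
      then obtain s' where s': "s' \<ge> s" "forces P e (ps s') (2 * x)" using H_forces by (auto simp: HL_def)
      have "cle (ps s') (ps s)" using seq_cle[of ps, OF desc s'(1)] .
      then show False using a0[rule_format, of "ps s'" x] conds[of s'] s' x by simp
    next
      case 3
      then obtain a0 where a0: "\<forall>r x. is_cond r \<and> cle r (ps s) \<and> a0 \<le> x \<longrightarrow> \<not> forces P e r (2 * x + 1)"
        unfolding Bq_def by blast
      have "\<not> HR \<subseteq> {..<a0}" using HRi finite_subset by blast
      then obtain x where x0: "x \<in> HR" "x \<notin> {..<a0}" by blast
      then have x: "x \<in> HR" "a0 \<le> x" by auto
      then obtain s' where s': "s' \<ge> s" "forces P e (ps s') (2 * x + 1)" using H_forces by (auto simp: HR_def)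
      have "cle (ps s') (ps s)" using seq_cle[of ps, OF desc s'(1)] .
      then show False using a0[rule_format, of "ps s'" x] conds[of s'] s' x by simp
    qed
  next
    assume "\<exists>s. \<not> (\<exists>q\<in>W. cle q (ps s))"
    then obtain s where noW: "\<And>q. q \<in> W \<Longrightarrow> \<not> cle q (ps s)" by blast
    define p where "p = ps s"
    have pc: "is_cond p" using conds by (simp add: p_def)
    have noW': "q \<notin> W" if "cle q p" for q using noW[of q] that unfolding p_def by blast
    have "p \<notin> W" using noW' cle_refl by blast
    then have "\<not> Bq P e 0 p" using pc by (auto simp: W_def Wset_def)
    then obtain r x where r: "is_cond r" "cle r p" "clen p \<le> x" "forces P e r (2 * x + 0)"
      unfolding Bq_def by blast
    define m1 where "m1 = max (clen r) (Suc x)"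
    define r' where "r' = ext r m1 x d"
    have r'c: "is_cond r'" unfolding r'_def by (rule ext_cond[OF r(1) _ d2]) (simp add: m1_def)
    have r'p: "cle r' p" unfolding r'_def by (rule ext_cle[OF r(2) _ r(3)]) (simp add: m1_def)
    have r'f: "forces P e r' (2 * x)"
      using forces_mono[OF r(1) r'c _ ] ext_sig_ext[of r m1 x d] r(4) by (simp add: r'_def m1_def)
    have r'l: "clen r' = m1" by (simp add: r'_def)
    have xm: "x < m1" by (simp add: m1_def)
    have labx: "clab r' x = (d, m1)" by (simp add: r'_def ext_clab xm)
    have "r' \<notin> W" using noW' r'p by blast
    then have "\<not> Bq P e 1 r'" using r'c by (auto simp: W_def Wset_def)
    then obtain r2 y where r2: "is_cond r2" "cle r2 r'" "m1 \<le> y" "forces P e r2 (2 * y + 1)"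
      unfolding Bq_def using r'l by (metis (no_types, lifting))
    define m2 where "m2 = max (clen r2) (Suc y)"
    define q where "q = ext r2 m2 y d"
    have qc: "is_cond q" unfolding q_def by (rule ext_cond[OF r2(1) _ d2]) (simp add: m2_def)
    have qr': "cle q r'" unfolding q_def by (rule ext_cle[OF r2(2) _]) (use r2(3) r'l in \<open>simp_all add: m2_def\<close>)
    have qp: "cle q p" using cle_trans[OF qr' r'p] .
    have se: "sig_ext r2 q" unfolding q_def by (rule ext_sig_ext) (simp add: m2_def)
    have qf1: "forces P e q (2 * y + 1)" using forces_mono[OF r2(1) qc se r2(4)] .
    have qf0: "forces P e q (2 * x)" using forces_mono[OF r'c qc cle_sig_ext[OF qr'] r'f] .
    have ql: "clen q = m2" by (simp add: q_def)
    have ym: "y < m2" by (simp add: m2_def)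
    have xy: "x < y" using xm r2(3) by simp
    have r2l: "m1 \<le> clen r2" using r2(2) r'l by (simp add: cle_def)
    have "clab q x = clab r2 x" unfolding q_def using xy xm r2l ym by (simp add: ext_clab)
    also have "\<dots> = clab r' x" using r2(2) r'l xm by (simp add: cle_def)
    finally have lq: "clab q x = (d, m1)" using labx by simp
    have "csig q x y = d" using qc lq xy ym ql r2(3) unfolding is_cond_def by fastforce
    then have "fpair (csig q) x y \<noteq> col" using xy dc by (simp add: fpair_def)
    then have "Aq P e col q" unfolding Aq_def using ql xm ym xy r2l qf0 qf1
      by (intro exI[of _ x] exI[of _ y]) (simp add: m2_def)
    then have "q \<in> W" using qc by (simp add: W_def Wset_def)
    then show False using noW' qp by blast
  qed
qed


end
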